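(* In the i.d. model with $\mathbb{E}X_i^2<\infty$, the moment $T_n^{\mathrm{last}}$ of the last collision satisfies $T_n^{\mathrm{last}}\xrightarrow{\mathbb{P}}1$ as $n\to\infty$.
   Context: Sticky particle system: $n$ point particles, each of mass $1/n$, zero initial velocities, numbered $1,\dots,n$ from left to right; between collisions each particle (cluster) moves with acceleration equal to the total mass to its right minus the total mass to its left; colliding particles stick together, conserving mass and momentum. i.d. model: $(X_i)$ i.i.d. nonnegative with $\mathbb{E}X_i=1$, $S_j=X_1+\dots+X_j$, particle $j$ starts at $S_j/n$. $T_n^{\mathrm{last}}$ is the time after which all $n$ particles form a single cluster (the time of the last collision). *)

theory Defs
  imports "HOL-Probability.Probability"
begin

text \<open>Event-driven description of the sticky particle system.
A cluster is a triple (mass, position, velocity); a state is the list of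
clusters ordered from left to right.\<close>

type_synonym cluster = "real \<times> real \<times> real"

definition cmass :: "cluster \<Rightarrow> real" where "cmass c = fst c"
definition cpos :: "cluster \<Rightarrow> real" where "cpos c = fst (snd c)"
definition cvel :: "cluster \<Rightarrow> real" where "cvel c = snd (snd c)"

definition accel :: "cluster list \<Rightarrow> nat \<Rightarrow> real" where
  "accel cs k = (\<Sum>i\<in>{k<..<length cs}. cmass (cs ! i)) - (\<Sum>i<k. cmass (cs ! i))"

definition gap_fun :: "cluster list \<Rightarrow> nat \<Rightarrow> real \<Rightarrow> real" where
  "gap_fun cs k t =
     (cpos (cs ! Suc k) - cpos (cs ! k)) + (cvel (cs ! Suc k) - cvel (cs ! k)) * t
     + (accel cs (Suc k) - accel cs k) * t ^ 2 / 2"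

definition coll_time :: "cluster list \<Rightarrow> nat \<Rightarrow> real" where
  "coll_time cs k = Inf {t. 0 \<le> t \<and> gap_fun cs k t \<le> 0}"

text \<open>Time until the next collision (for at least two clusters).\<close>
definition next_time :: "cluster list \<Rightarrow> real" where
  "next_time cs = Min (coll_time cs ` {..<length cs - 1})"

definition evolve :: "cluster list \<Rightarrow> real \<Rightarrow> cluster list" where
  "evolve cs tau = map (\<lambda>k. (cmass (cs ! k),
        cpos (cs ! k) + cvel (cs ! k) * tau + accel cs k * tau ^ 2 / 2,
        cvel (cs ! k) + accel cs k * tau)) [0..<length cs]"

definition combine :: "cluster \<Rightarrow> cluster \<Rightarrow> cluster" where
  "combine c1 c2 = (cmass c1 + cmass c2, cpos c1,
      (cmass c1 * cvel c1 + cmass c2 * cvel c2) / (cmass c1 + cmass c2))"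

fun merge :: "cluster list \<Rightarrow> cluster list" where
  "merge [] = []"
| "merge [c] = [c]"
| "merge (c1 # c2 # cs) =
     (if cpos c1 = cpos c2 then merge (combine c1 c2 # cs) else c1 # merge (c2 # cs))"

definition step :: "cluster list \<Rightarrow> real \<times> cluster list" where
  "step cs = (let tau = next_time cs in (tau, merge (evolve cs tau)))"

text \<open>Total time until a single cluster remains (with fuel k; each event
reduces the number of clusters, so fuel n suffices for n particles).\<close>
fun time_to_single :: "nat \<Rightarrow> cluster list \<Rightarrow> real" where
  "time_to_single 0 cs = 0"
| "time_to_single (Suc k) cs =
     (if length cs \<le> 1 then 0 else fst (step cs) + time_to_single k (snd (step cs)))"

text \<open>Initial state of the i.d. model: particle j (j = 1..n) of mass 1/n at S_j/n, velocity 0.\<close>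
definition init_state :: "nat \<Rightarrow> (nat \<Rightarrow> real) \<Rightarrow> cluster list" where
  "init_state n x = map (\<lambda>j. (1 / real n, (\<Sum>i=1..j. x i) / real n, 0)) [1..<Suc n]"

definition T_last :: "nat \<Rightarrow> (nat \<Rightarrow> real) \<Rightarrow> real" where
  "T_last n x = time_to_single n (init_state n x)"

end

theory Submission
  imports Defs "HOL-Probability.Probability"
begin

definition psum :: "(cluster \<Rightarrow> real) \<Rightarrow> cluster list \<Rightarrow> nat \<Rightarrow> real" where
  "psum w xs i = sum_list (map w (take i xs))"

definition good :: "(cluster \<Rightarrow> real) \<Rightarrow> bool" where
  "good w \<longleftrightarrow> (\<forall>c1 c2. cpos c1 = cpos c2 \<longrightarrow> 0 < cmass c1 \<longrightarrow> 0 < cmass c2 \<longrightarrow>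
      w (combine c1 c2) = w c1 + w c2)"

lemma goodD: "good w \<Longrightarrow> cpos c1 = cpos c2 \<Longrightarrow> 0 < cmass c1 \<Longrightarrow> 0 < cmass c2 \<Longrightarrow>
      w (combine c1 c2) = w c1 + w c2"
  unfolding good_def by blast

lemma good_mass: "good cmass"
  by (simp add: good_def combine_def cmass_def)
lemma good_mom: "good (\<lambda>c. cmass c * cpos c)"
  by (simp add: good_def combine_def cmass_def cpos_def algebra_simps)
lemma good_vel: "good (\<lambda>c. cmass c * cvel c)"
  by (auto simp add: good_def combine_def cmass_def cvel_def cpos_def field_simps)

lemma combine_pos [simp]: "cpos (combine c1 c2) = cpos c1"
  by (simp add: combine_def cpos_def)
lemma combine_mass [simp]: "cmass (combine c1 c2) = cmass c1 + cmass c2"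
  by (simp add: combine_def cmass_def)

lemma merge_mass_pos: "\<forall>c\<in>set cs. 0 < cmass c \<Longrightarrow> \<forall>c\<in>set (merge cs). 0 < cmass c"
  by (induction cs rule: merge.induct) auto

lemma merge_len: "length (merge cs) \<le> length cs"
  by (induction cs rule: merge.induct) auto

lemma merge_nonempty: "cs \<noteq> [] \<Longrightarrow> merge cs \<noteq> []"
  by (induction cs rule: merge.induct) auto

lemma merge_psum:
  "\<forall>c\<in>set cs. 0 < cmass c \<Longrightarrow> i \<le> length (merge cs) \<Longrightarrow>
   \<exists>j \<le> length cs. \<forall>w. good w \<longrightarrow> psum w (merge cs) i = psum w cs j"
proof (induction cs arbitrary: i rule: merge.induct)
  case 1 then show ?case by auto
next
  case (2 c) then show ?case by auto
next
  case (3 c1 c2 cs)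
  show ?case
  proof (cases "cpos c1 = cpos c2")
    case True
    have pos: "\<forall>c\<in>set (combine c1 c2 # cs). 0 < cmass c" using "3.prems" by auto
    from "3.IH"(1)[OF True pos] "3.prems"(2) True
    obtain j where j: "j \<le> length (combine c1 c2 # cs)"
      "\<forall>w. good w \<longrightarrow> psum w (merge (combine c1 c2 # cs)) i = psum w (combine c1 c2 # cs) j"
      by auto
    show ?thesis
    proof (cases j)
      case 0 then show ?thesis using j True by (intro exI[of _ 0]) (auto simp: psum_def)
    next
      case (Suc j')
      have "\<forall>w. good w \<longrightarrow> psum w (merge (c1 # c2 # cs)) i = psum w (c1 # c2 # cs) (Suc (Suc j'))"
      proof (intro allI impI)
        fix w assume g: "good w"
        have "w (combine c1 c2) = w c1 + w c2" using goodD[OF g True] "3.prems"(1) by auto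
        then show "psum w (merge (c1 # c2 # cs)) i = psum w (c1 # c2 # cs) (Suc (Suc j'))"
          using j Suc True g by (auto simp: psum_def)
      qed
      then show ?thesis using j Suc by (intro exI[of _ "Suc (Suc j')"]) auto
    qed
  next
    case False
    show ?thesis
    proof (cases i)
      case 0 then show ?thesis by (intro exI[of _ 0]) (auto simp: psum_def)
    next
      case (Suc i')
      have pos: "\<forall>c\<in>set (c2 # cs). 0 < cmass c" using "3.prems" by auto
      from "3.IH"(2)[OF False pos, of i'] "3.prems"(2) False Suc
      obtain j where j: "j \<le> length (c2 # cs)"
        "\<forall>w. good w \<longrightarrow> psum w (merge (c2 # cs)) i' = psum w (c2 # cs) j" by auto
      show ?thesis using j Suc False by (intro exI[of _ "Suc j"]) (auto simp: psum_def)
    qed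
  qed
qed

lemma merge_single_eqpos:
  "length (merge cs) \<le> 1 \<Longrightarrow> \<forall>c\<in>set cs. cpos c = cpos (hd cs)"
proof (induction cs rule: merge.induct)
  case 1 show ?case by simp
next
  case (2 c) show ?case by simp
next
  case (3 c1 c2 cs)
  show ?case
  proof (cases "cpos c1 = cpos c2")
    case True
    have "length (merge (combine c1 c2 # cs)) \<le> 1" using "3.prems" True by simp
    then have "\<forall>c\<in>set (combine c1 c2 # cs). cpos c = cpos (hd (combine c1 c2 # cs))"
      using "3.IH"(1)[OF True] by blast
    then have "\<forall>c\<in>set cs. cpos c = cpos c1" by simp
    with True show ?thesis by simp
  next
    case False
    have "merge (c2 # cs) \<noteq> []" by (rule merge_nonempty) simp
    then have "length (merge (c1 # c2 # cs)) \<ge> 2" using False by (cases "merge (c2 # cs)") auto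
    with "3.prems" show ?thesis by simp
  qed
qed
lemma merge_shorter:
  "Suc l < length cs \<Longrightarrow> cpos (cs ! l) = cpos (cs ! Suc l) \<Longrightarrow> length (merge cs) < length cs"
proof (induction cs arbitrary: l rule: merge.induct)
  case (3 c1 c2 cs)
  show ?case
  proof (cases "cpos c1 = cpos c2")
    case True
    then show ?thesis using merge_len[of "combine c1 c2 # cs"] by simp
  next
    case False
    then obtain l' where l: "l = Suc l'" using "3.prems" by (cases l) auto
    with "3.prems" have "length (merge (c2 # cs)) < length (c2 # cs)"
      using "3.IH"(2)[OF False, of l'] by auto
    with False show ?thesis by simp
  qed
qed auto

lemma merge_pos_from:
  "\<forall>c\<in>set (merge cs). \<exists>c'\<in>set cs. cpos c = cpos c'"
proof (induction cs rule: merge.induct)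
  case 1 show ?case by simp
next
  case (2 c) show ?case by simp
next
  case (3 c1 c2 cs)
  show ?case
  proof (cases "cpos c1 = cpos c2")
    case True
    have "\<forall>c\<in>set (merge (combine c1 c2 # cs)). \<exists>c'\<in>set (combine c1 c2 # cs). cpos c = cpos c'"
      using "3.IH"(1)[OF True] .
    moreover have "\<forall>c'\<in>set (combine c1 c2 # cs). \<exists>c''\<in>set (c1 # c2 # cs). cpos c' = cpos c''"
      by auto
    ultimately show ?thesis using True by (simp only: merge.simps if_True) metis
  next
    case False
    have "\<forall>c\<in>set (merge (c2 # cs)). \<exists>c'\<in>set (c2 # cs). cpos c = cpos c'"
      using "3.IH"(2)[OF False] .
    then show ?thesis using False by (simp only: merge.simps if_False) auto
  qed
qed

lemma merge_sorted:
  "sorted (map cpos cs) \<Longrightarrow> sorted (map cpos (merge cs))"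
proof (induction cs rule: merge.induct)
  case 1 show ?case by simp
next
  case (2 c) show ?case by simp
next
  case (3 c1 c2 cs)
  show ?case
  proof (cases "cpos c1 = cpos c2")
    case True
    with "3.prems" have "sorted (map cpos (combine c1 c2 # cs))" by simp
    with "3.IH"(1)[OF True] True show ?thesis by simp
  next
    case False
    have s: "sorted (map cpos (merge (c2 # cs)))" using "3.IH"(2)[OF False] "3.prems" by simp
    have le: "\<forall>c\<in>set (c2 # cs). cpos c1 \<le> cpos c" using "3.prems" by simp
    have "\<forall>c\<in>set (merge (c2 # cs)). cpos c1 \<le> cpos c"
      using merge_pos_from[of "c2 # cs"] le by metis
    with s False show ?thesis by simp
  qed
qed


lemma psum_nth: "i \<le> length xs \<Longrightarrow> psum w xs i = (\<Sum>l<i. w (xs ! l))"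
  unfolding psum_def
  by (simp add: sum_list_sum_nth min_def atLeast0LessThan)

lemma merge_total:
  "\<forall>c\<in>set cs. 0 < cmass c \<Longrightarrow> good w \<Longrightarrow> sum_list (map w (merge cs)) = sum_list (map w cs)"
proof (induction cs rule: merge.induct)
  case (3 c1 c2 cs)
  show ?case
  proof (cases "cpos c1 = cpos c2")
    case True
    have "w (combine c1 c2) = w c1 + w c2" using goodD[OF "3.prems"(2) True] "3.prems"(1) by simp
    moreover have "sum_list (map w (merge (combine c1 c2 # cs))) = sum_list (map w (combine c1 c2 # cs))"
      using "3.IH"(1)[OF True] "3.prems" by simp
    ultimately show ?thesis using True by simp
  next
    case False
    then show ?thesis using "3.IH"(2)[OF False] "3.prems" by simp
  qed
qed auto

lemma psum_length: "psum w xs (length xs) = sum_list (map w xs)"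
  by (simp add: psum_def)

definition P0 :: "nat \<Rightarrow> (nat \<Rightarrow> real) \<Rightarrow> nat \<Rightarrow> real" where
  "P0 n x k = (\<Sum>j=1..k. (1 / real n) * ((\<Sum>i=1..j. x i) / real n))"

definition Inv :: "nat \<Rightarrow> (nat \<Rightarrow> real) \<Rightarrow> real \<Rightarrow> cluster list \<Rightarrow> bool" where
  "Inv n x t cs \<longleftrightarrow> (\<forall>c\<in>set cs. 0 < cmass c) \<and> sum_list (map cmass cs) = 1 \<and>
     (\<forall>i \<le> length cs. \<exists>k \<le> n. psum cmass cs i = real k / real n \<and>
        psum (\<lambda>c. cmass c * cpos c) cs i = P0 n x k + (real k / real n) * (1 - real k / real n) * t^2 / 2 \<and>
        psum (\<lambda>c. cmass c * cvel c) cs i = (real k / real n) * (1 - real k / real n) * t)"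

lemma Inv_merge: "Inv n x t cs \<Longrightarrow> Inv n x t (merge cs)"
proof -
  assume I: "Inv n x t cs"
  have pos: "\<forall>c\<in>set cs. 0 < cmass c" using I by (simp add: Inv_def)
  show ?thesis unfolding Inv_def
  proof (intro conjI allI impI)
    show "\<forall>c\<in>set (merge cs). 0 < cmass c" using merge_mass_pos[OF pos] .
    show "sum_list (map cmass (merge cs)) = 1"
      using merge_total[OF pos good_mass] I by (simp add: Inv_def)
    fix i assume i: "i \<le> length (merge cs)"
    obtain j where j: "j \<le> length cs" "\<forall>w. good w \<longrightarrow> psum w (merge cs) i = psum w cs j"
      using merge_psum[OF pos i] by blast
    obtain k where "k \<le> n" "psum cmass cs j = real k / real n"
        "psum (\<lambda>c. cmass c * cpos c) cs j = P0 n x k + (real k / real n) * (1 - real k / real n) * t^2 / 2"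
        "psum (\<lambda>c. cmass c * cvel c) cs j = (real k / real n) * (1 - real k / real n) * t"
      using I j(1) unfolding Inv_def by blast
    then show "\<exists>k \<le> n. psum cmass (merge cs) i = real k / real n \<and>
        psum (\<lambda>c. cmass c * cpos c) (merge cs) i = P0 n x k + (real k / real n) * (1 - real k / real n) * t^2 / 2 \<and>
        psum (\<lambda>c. cmass c * cvel c) (merge cs) i = (real k / real n) * (1 - real k / real n) * t"
      using j(2) good_mass good_mom good_vel by auto
  qed
qed

lemma length_evolve [simp]: "length (evolve cs tau) = length cs"
  by (simp add: evolve_def)

lemma nth_evolve: "l < length cs \<Longrightarrow> evolve cs tau ! l = (cmass (cs ! l),
        cpos (cs ! l) + cvel (cs ! l) * tau + accel cs l * tau ^ 2 / 2,
        cvel (cs ! l) + accel cs l * tau)"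
  by (simp add: evolve_def)

lemma evolve_comps:
  assumes "l < length cs"
  shows "cmass (evolve cs tau ! l) = cmass (cs ! l)"
    "cpos (evolve cs tau ! l) = cpos (cs ! l) + cvel (cs ! l) * tau + accel cs l * tau ^ 2 / 2"
    "cvel (evolve cs tau ! l) = cvel (cs ! l) + accel cs l * tau"
  using assms by (simp_all add: nth_evolve cmass_def cpos_def cvel_def)

lemma sum_rest:
  fixes m :: "nat \<Rightarrow> real"
  assumes "i < N"
  shows "(\<Sum>r\<in>{i<..<N}. m r) = (\<Sum>r<N. m r) - (\<Sum>r<i. m r) - m i"
proof -
  have "{..<N} = {..<i} \<union> {i} \<union> {i<..<N}" using assms by auto
  moreover have "(\<Sum>r\<in>{..<i} \<union> {i} \<union> {i<..<N}. m r) = (\<Sum>r<i. m r) + m i + (\<Sum>r\<in>{i<..<N}. m r)"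
    by (subst sum.union_disjoint; auto)+
  ultimately show ?thesis by simp
qed

lemma sum_accel:
  assumes "i \<le> length cs"
  shows "(\<Sum>l<i. cmass (cs ! l) * accel cs l) =
     (\<Sum>l<i. cmass (cs ! l)) * ((\<Sum>l<length cs. cmass (cs ! l)) - (\<Sum>l<i. cmass (cs ! l)))"
  using assms
proof (induction i)
  case 0 then show ?case by simp
next
  case (Suc i)
  let ?m = "\<lambda>l. cmass (cs ! l)"
  have a: "accel cs i = ((\<Sum>r<length cs. ?m r) - (\<Sum>r<i. ?m r) - ?m i) - (\<Sum>r<i. ?m r)"
    unfolding accel_def using sum_rest[of i "length cs" ?m] Suc.prems by simp
  have "(\<Sum>l<Suc i. ?m l * accel cs l) = (\<Sum>l<i. ?m l * accel cs l) + ?m i * accel cs i" by simp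
  also have "\<dots> = (\<Sum>l<i. ?m l) * ((\<Sum>l<length cs. ?m l) - (\<Sum>l<i. ?m l)) + ?m i * accel cs i"
    using Suc by simp
  finally show ?case by (simp add: a algebra_simps)
qed

lemma Inv_evolve: "Inv n x t cs \<Longrightarrow> Inv n x (t + tau) (evolve cs tau)"
proof -
  assume I: "Inv n x t cs"
  let ?m = "\<lambda>l. cmass (cs ! l)"
  have tot: "(\<Sum>l<length cs. ?m l) = 1"
    using I psum_nth[of "length cs" cs cmass] psum_length[of cmass cs] by (simp add: Inv_def)
  show ?thesis unfolding Inv_def
  proof (intro conjI allI impI)
    show "\<forall>c\<in>set (evolve cs tau). 0 < cmass c"
    proof
      fix c assume "c \<in> set (evolve cs tau)"
      then obtain l where l: "l < length cs" "c = evolve cs tau ! l" by (auto simp: in_set_conv_nth)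
      then have "cmass c = cmass (cs ! l)" by (simp add: evolve_comps)
      moreover have "cs ! l \<in> set cs" using l by simp
      ultimately show "0 < cmass c" using I by (simp add: Inv_def)
    qed
    have "sum_list (map cmass (evolve cs tau)) = (\<Sum>l<length cs. cmass (evolve cs tau ! l))"
      using psum_nth[of "length cs" "evolve cs tau" cmass] psum_length[of cmass "evolve cs tau"] by simp
    also have "\<dots> = 1" using tot by (simp add: evolve_comps)
    finally show "sum_list (map cmass (evolve cs tau)) = 1" .
    fix i assume i: "i \<le> length (evolve cs tau)"
    then have i': "i \<le> length cs" by simp
    obtain k where k: "k \<le> n" "psum cmass cs i = real k / real n"
        "psum (\<lambda>c. cmass c * cpos c) cs i = P0 n x k + (real k / real n) * (1 - real k / real n) * t^2 / 2"
        "psum (\<lambda>c. cmass c * cvel c) cs i = (real k / real n) * (1 - real k / real n) * t"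
      using I i' unfolding Inv_def by blast
    define \<mu> where "\<mu> = real k / real n"
    have sa: "(\<Sum>l<i. ?m l * accel cs l) = \<mu> * (1 - \<mu>)"
      using sum_accel[OF i'] tot k(2) psum_nth[OF i', of cmass] by (simp add: \<mu>_def)
    have e1: "psum cmass (evolve cs tau) i = psum cmass cs i"
      using i' by (simp add: psum_nth evolve_comps)
    have e2: "psum (\<lambda>c. cmass c * cpos c) (evolve cs tau) i =
        psum (\<lambda>c. cmass c * cpos c) cs i + tau * psum (\<lambda>c. cmass c * cvel c) cs i
        + tau^2/2 * (\<Sum>l<i. ?m l * accel cs l)"
      using i' by (simp add: psum_nth evolve_comps sum.distrib sum_distrib_left sum_divide_distrib
          algebra_simps)
    have e3: "psum (\<lambda>c. cmass c * cvel c) (evolve cs tau) i =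
        psum (\<lambda>c. cmass c * cvel c) cs i + tau * (\<Sum>l<i. ?m l * accel cs l)"
      using i' by (simp add: psum_nth evolve_comps sum.distrib sum_distrib_left algebra_simps)
    show "\<exists>k \<le> n. psum cmass (evolve cs tau) i = real k / real n \<and>
        psum (\<lambda>c. cmass c * cpos c) (evolve cs tau) i = P0 n x k + (real k / real n) * (1 - real k / real n) * (t + tau)^2 / 2 \<and>
        psum (\<lambda>c. cmass c * cvel c) (evolve cs tau) i = (real k / real n) * (1 - real k / real n) * (t + tau)"
    proof (intro exI[of _ k] conjI)
      show "k \<le> n" by fact
      have V: "psum (\<lambda>c. cmass c * cvel c) cs i = \<mu> * (1 - \<mu>) * t" using k(4) by (simp add: \<mu>_def)
      have Pm: "psum (\<lambda>c. cmass c * cpos c) cs i = P0 n x k + \<mu> * (1 - \<mu>) * t^2 / 2" using k(3) by (simp add: \<mu>_def)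
      show "psum cmass (evolve cs tau) i = real k / real n" using e1 k(2) by simp
      have "psum (\<lambda>c. cmass c * cpos c) (evolve cs tau) i
          = P0 n x k + \<mu> * (1 - \<mu>) * t^2 / 2 + tau * (\<mu> * (1 - \<mu>) * t) + tau^2/2 * (\<mu> * (1 - \<mu>))"
        unfolding e2 V Pm sa ..
      also have "\<dots> = P0 n x k + \<mu> * (1 - \<mu>) * (t + tau)^2 / 2"
        by (simp add: power2_eq_square field_simps)
      finally show "psum (\<lambda>c. cmass c * cpos c) (evolve cs tau) i = P0 n x k + (real k / real n) * (1 - real k / real n) * (t + tau)^2 / 2"
        by (simp add: \<mu>_def)
      have "psum (\<lambda>c. cmass c * cvel c) (evolve cs tau) i = \<mu> * (1 - \<mu>) * t + tau * (\<mu> * (1 - \<mu>))"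
        unfolding e3 V sa ..
      then show "psum (\<lambda>c. cmass c * cvel c) (evolve cs tau) i = (real k / real n) * (1 - real k / real n) * (t + tau)"
        unfolding \<mu>_def[symmetric] by (simp add: algebra_simps)
    qed
  qed
qed


lemma quad_root:
  fixes A B D :: real
  assumes D: "D < 0" and A: "0 < A"
  defines "r \<equiv> (B + sqrt (B^2 - 2*A*D)) / (-D)"
  shows "0 < r" "A + B*r + D*r^2/2 = 0" "\<And>t. 0 \<le> t \<Longrightarrow> t < r \<Longrightarrow> 0 < A + B*t + D*t^2/2"
proof -
  define s where "s = sqrt (B^2 - 2*A*D)"
  have pos: "0 < B^2 - 2*A*D" using D A by (smt (verit) mult_pos_neg zero_le_power2)
  have s2: "s^2 = B^2 - 2*A*D" unfolding s_def by (rule real_sqrt_pow2) (use pos in linarith)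
  have s0: "0 \<le> s" using pos by (simp add: s_def)
  have sB: "\<bar>B\<bar> < s"
  proof -
    have "B^2 < s^2" using s2 D A by (smt (verit) mult_pos_neg)
    then have "\<bar>B\<bar>^2 < s^2" by simp
    then show ?thesis using s0 by (rule power2_less_imp_less)
  qed
  define r' where "r' = (B - s) / (-D)"
  have rr: "r = (B + s) / (-D)" by (simp add: r_def s_def)
  show r0: "0 < r" unfolding rr using sB D by (intro divide_pos_pos) auto
  have r'0: "r' < 0" unfolding r'_def using sB D by (intro divide_neg_pos) auto
  have fact: "A + B*t + D*t^2/2 = D/2 * (t - r) * (t - r')" for t
  proof -
    have "D/2 * (t - r) * (t - r') = D/2*t^2 - D/2*(r + r')*t + D/2*(r*r')"
      by (simp add: power2_eq_square field_simps)
    moreover have "D/2*(r + r') = - B" unfolding rr r'_def using D by (simp add: field_simps)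
    moreover have "r * r' = (B^2 - s^2) / D^2" unfolding rr r'_def using D
      by (simp add: field_simps power2_eq_square)
    then have "r * r' * D^2 = B^2 - s^2" using D by simp
    then have "r * r' * D^2 = 2*A*D" using s2 by simp
    then have "(r * r' * D - 2*A) * D = 0" by (simp add: power2_eq_square algebra_simps)
    then have "r * r' * D = 2*A" using D by simp
    then have "D/2*(r*r') = A" by (simp add: algebra_simps)
    ultimately show ?thesis by simp
  qed
  show "A + B*r + D*r^2/2 = 0" using fact[of r] by simp
  fix t assume t: "0 \<le> t" "t < r"
  have "0 < D/2 * (t - r)" using D t by (intro mult_neg_neg) auto
  moreover have "0 < t - r'" using t r'0 by simp
  ultimately show "0 < A + B*t + D*t^2/2" unfolding fact by simp
qed

lemma quad_inf:
  fixes A B D :: real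
  assumes D: "D < 0"
  shows "Inf {t. 0 \<le> t \<and> A + B*t + D*t^2/2 \<le> 0} =
           (if A \<le> 0 then 0 else (B + sqrt (B^2 - 2*A*D)) / (-D))"
proof (cases "A \<le> 0")
  case True
  have "Inf {t. 0 \<le> t \<and> A + B*t + D*t^2/2 \<le> 0} = 0"
    by (rule cInf_eq_minimum) (use True in auto)
  then show ?thesis using True by simp
next
  case False
  then have A: "0 < A" by simp
  define r where "r = (B + sqrt (B^2 - 2*A*D)) / (-D)"
  note q = quad_root[OF D A, where B=B, folded r_def]
  have "Inf {t. 0 \<le> t \<and> A + B*t + D*t^2/2 \<le> 0} = r"
  proof (rule cInf_eq_minimum)
    show "r \<in> {t. 0 \<le> t \<and> A + B*t + D*t^2/2 \<le> 0}" using q(1,2) by simp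
    fix x assume "x \<in> {t. 0 \<le> t \<and> A + B*t + D*t^2/2 \<le> 0}"
    then show "r \<le> x" using q(3)[where t=x] by force
  qed
  then show ?thesis using False by (simp add: r_def)
qed

lemma quad_props:
  fixes A B D :: real
  assumes D: "D < 0" and A: "0 \<le> A"
  defines "r \<equiv> Inf {t. 0 \<le> t \<and> A + B*t + D*t^2/2 \<le> 0}"
  shows "0 \<le> r" "A + B*r + D*r^2/2 = 0" "\<And>t. 0 \<le> t \<Longrightarrow> t < r \<Longrightarrow> 0 < A + B*t + D*t^2/2"
proof -
  have rr: "r = (if A \<le> 0 then 0 else (B + sqrt (B^2 - 2*A*D)) / (-D))"
    unfolding r_def by (rule quad_inf[OF D])
  show "0 \<le> r"
    using quad_root(1)[OF D, where A=A and B=B] rr by (cases "A \<le> 0") auto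
  show "A + B*r + D*r^2/2 = 0"
    using quad_root(2)[OF D, where A=A and B=B] rr A by (cases "A \<le> 0") auto
  fix t assume "0 \<le> t" "t < r"
  then show "0 < A + B*t + D*t^2/2"
    using quad_root(3)[OF D, where A=A and B=B and t=t] rr A by (cases "A \<le> 0") auto
qed

lemma accel_diff:
  assumes "Suc k < length cs"
  shows "accel cs (Suc k) - accel cs k = - (cmass (cs ! k) + cmass (cs ! Suc k))"
proof -
  let ?m = "\<lambda>l. cmass (cs ! l)"
  have "accel cs (Suc k) = ((\<Sum>r<length cs. ?m r) - (\<Sum>r<Suc k. ?m r) - ?m (Suc k)) - (\<Sum>r<Suc k. ?m r)"
    unfolding accel_def using sum_rest[of "Suc k" "length cs" ?m] assms by simp
  moreover have "accel cs k = ((\<Sum>r<length cs. ?m r) - (\<Sum>r<k. ?m r) - ?m k) - (\<Sum>r<k. ?m r)"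
    unfolding accel_def using sum_rest[of k "length cs" ?m] assms by simp
  ultimately show ?thesis by simp
qed

lemma gap_eq: "gap_fun cs k t = (cpos (cs ! Suc k) - cpos (cs ! k)) + (cvel (cs ! Suc k) - cvel (cs ! k)) * t
     + (accel cs (Suc k) - accel cs k) * t^2 / 2"
  by (simp add: gap_fun_def)

lemma coll_props:
  assumes pos: "\<forall>c\<in>set cs. 0 < cmass c" and s: "sorted (map cpos cs)" and k: "Suc k < length cs"
  shows "0 \<le> coll_time cs k" "gap_fun cs k (coll_time cs k) = 0"
    "\<And>t. 0 \<le> t \<Longrightarrow> t < coll_time cs k \<Longrightarrow> 0 < gap_fun cs k t"
proof -
  define A where "A = cpos (cs ! Suc k) - cpos (cs ! k)"
  define B where "B = cvel (cs ! Suc k) - cvel (cs ! k)"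
  define D where "D = accel cs (Suc k) - accel cs k"
  have D: "D < 0" unfolding D_def accel_diff[OF k] using pos k
    by (smt (verit, ccfv_SIG) Suc_lessD nth_mem)
  have A: "0 \<le> A" unfolding A_def using s k by (simp add: sorted_iff_nth_Suc)
  have g: "gap_fun cs k t = A + B*t + D*t^2/2" for t
    by (simp add: gap_fun_def A_def B_def D_def)
  have c: "coll_time cs k = Inf {t. 0 \<le> t \<and> A + B*t + D*t^2/2 \<le> 0}"
    unfolding coll_time_def g ..
  note qp = quad_props[OF D A, where B=B]
  show "0 \<le> coll_time cs k" using qp(1) c by simp
  show "gap_fun cs k (coll_time cs k) = 0" using qp(2) c g by simp
  fix t assume "0 \<le> t" "t < coll_time cs k"
  then show "0 < gap_fun cs k t" using qp(3)[of t] c g by simp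
qed

lemma evolve_gap:
  assumes "Suc k < length cs"
  shows "cpos (evolve cs tau ! Suc k) - cpos (evolve cs tau ! k) = gap_fun cs k tau"
  using assms by (simp add: evolve_comps gap_fun_def field_simps)

lemma step_props:
  assumes pos: "\<forall>c\<in>set cs. 0 < cmass c" and s: "sorted (map cpos cs)" and N: "2 \<le> length cs"
  shows "0 \<le> next_time cs" "sorted (map cpos (merge (evolve cs (next_time cs))))"
    "length (merge (evolve cs (next_time cs))) < length cs"
proof -
  let ?I = "{..<length cs - 1}"
  have "0 \<in> ?I" using N by simp
  then have fin: "finite (coll_time cs ` ?I)" "coll_time cs ` ?I \<noteq> {}" by blast+
  have "next_time cs \<in> coll_time cs ` ?I" unfolding next_time_def by (rule Min_in[OF fin])
  then obtain k0 where k0: "k0 < length cs - 1" "next_time cs = coll_time cs k0" by auto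
  have le: "next_time cs \<le> coll_time cs j" if "j < length cs - 1" for j
    unfolding next_time_def using fin(1) that by (intro Min_le) auto
  let ?tau = "next_time cs"
  have k0': "Suc k0 < length cs" using k0 by simp
  show t0: "0 \<le> ?tau" using coll_props(1)[OF pos s k0'] k0 by simp
  have gapnn: "0 \<le> gap_fun cs j ?tau" if j: "Suc j < length cs" for j
  proof (cases "?tau < coll_time cs j")
    case True then show ?thesis using coll_props(3)[OF pos s j t0] by simp
  next
    case False
    then have "?tau = coll_time cs j" using le[of j] j by simp
    then show ?thesis using coll_props(2)[OF pos s j] by simp
  qed
  have se: "sorted (map cpos (evolve cs ?tau))"
    unfolding sorted_iff_nth_Suc
  proof (intro allI impI)
    fix j assume "Suc j < length (map cpos (evolve cs ?tau))"
    then have j: "Suc j < length cs" by simp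
    show "map cpos (evolve cs ?tau) ! j \<le> map cpos (evolve cs ?tau) ! Suc j"
      using gapnn[OF j] evolve_gap[OF j, of ?tau] j by simp
  qed
  then show "sorted (map cpos (merge (evolve cs ?tau)))" by (rule merge_sorted)
  have "cpos (evolve cs ?tau ! k0) = cpos (evolve cs ?tau ! Suc k0)"
    using evolve_gap[OF k0', of ?tau] coll_props(2)[OF pos s k0'] k0(2) by simp
  then show "length (merge (evolve cs ?tau)) < length cs"
    using merge_shorter[of k0 "evolve cs ?tau"] k0' by simp
qed


lemma final_formula:
  assumes I: "Inv n x T es" and L: "2 \<le> length es" and M: "length (merge es) \<le> 1"
  shows "\<exists>k. 0 < k \<and> k < n \<and> real k / real n * P0 n x n =
           P0 n x k + real k / real n * (1 - real k / real n) * T^2 / 2"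
proof -
  define p where "p = cpos (hd es)"
  have eqp: "\<forall>c\<in>set es. cpos c = p" using merge_single_eqpos[OF M] by (simp add: p_def)
  have mom: "psum (\<lambda>c. cmass c * cpos c) es i = p * psum cmass es i" if i: "i \<le> length es" for i
  proof -
    have "psum (\<lambda>c. cmass c * cpos c) es i = (\<Sum>l<i. cmass (es ! l) * cpos (es ! l))"
      using psum_nth[OF i] .
    also have "\<dots> = (\<Sum>l<i. cmass (es ! l) * p)"
      using i eqp by (intro sum.cong) auto
    also have "\<dots> = p * psum cmass es i" using psum_nth[OF i, of cmass]
      by (simp add: sum_distrib_left mult.commute)
    finally show ?thesis .
  qed
  have pos: "\<forall>c\<in>set es. 0 < cmass c" and tot: "sum_list (map cmass es) = 1"
    using I by (auto simp: Inv_def)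
  obtain k' where k': "k' \<le> n" "psum cmass es (length es) = real k' / real n"
      "psum (\<lambda>c. cmass c * cpos c) es (length es) = P0 n x k' + (real k' / real n) * (1 - real k' / real n) * T^2 / 2"
    using I unfolding Inv_def by blast
  have "real k' / real n = 1" using k'(2) tot psum_length[of cmass es] by simp
  then have "real n \<noteq> 0 \<and> real k' = real n" by (metis divide_eq_1_iff)
  then have n0: "n \<noteq> 0" and kn: "k' = n" by auto
  have t1: "psum cmass es (length es) = 1" using tot psum_length[of cmass es] by simp
  have "p * 1 = P0 n x n + (real n / real n) * (1 - real n / real n) * T^2 / 2"
    using k'(3) mom[of "length es"] t1 kn by simp
  then have pP: "p = P0 n x n" by simp
  obtain k where k: "k \<le> n" "psum cmass es 1 = real k / real n"
      "psum (\<lambda>c. cmass c * cpos c) es 1 = P0 n x k + (real k / real n) * (1 - real k / real n) * T^2 / 2"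
  proof -
    have "1 \<le> length es" using L by simp
    then show ?thesis using that I unfolding Inv_def by blast
  qed
  have m0: "psum cmass es 1 = cmass (es ! 0)" using psum_nth[of 1 es cmass] L by simp
  have m01: "psum cmass es 2 = cmass (es ! 0) + cmass (es ! 1)" using psum_nth[of 2 es cmass] L
    by (simp add: numeral_2_eq_2)
  have "es ! 0 \<in> set es" using L by (intro nth_mem) linarith
  moreover have "es ! 1 \<in> set es" using L by (intro nth_mem) linarith
  ultimately
  have p0: "0 < cmass (es ! 0)" and p1: "0 < cmass (es ! 1)" using pos by auto
  have "psum cmass es 2 \<le> psum cmass es (length es)"
  proof -
    have "(\<Sum>l<2. cmass (es ! l)) \<le> (\<Sum>l<length es. cmass (es ! l))"
      using L pos by (intro sum_mono2) (auto simp: less_imp_le)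
    then show ?thesis using psum_nth[of 2 es cmass] psum_nth[of "length es" es cmass] L by simp
  qed
  then have lt1: "real k / real n < 1" using m01 m0 k(2) p1 tot psum_length[of cmass es] by simp
  have k0: "0 < k" using k(2) m0 p0 by (cases k) auto
  have kn': "k < n" using lt1 n0 by (simp add: divide_less_eq)
  have "p * (real k / real n) = P0 n x k + real k / real n * (1 - real k / real n) * T^2 / 2"
    using k(3) mom[of 1] L k(2) by simp
  then show ?thesis using k0 kn' pP by (intro exI[of _ k]) (simp add: mult.commute)
qed

lemma run:
  "Inv n x t cs \<Longrightarrow> sorted (map cpos cs) \<Longrightarrow> 2 \<le> length cs \<Longrightarrow> length cs \<le> Suc f \<Longrightarrow>
   0 \<le> time_to_single f cs \<and> (\<exists>k. 0 < k \<and> k < n \<and> real k / real n * P0 n x n =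
        P0 n x k + real k / real n * (1 - real k / real n) * (t + time_to_single f cs)^2 / 2)"
proof (induction f arbitrary: t cs)
  case 0 then show ?case by simp
next
  case (Suc f)
  let ?tau = "next_time cs"
  let ?es = "evolve cs ?tau"
  let ?cs' = "merge ?es"
  have pos: "\<forall>c\<in>set cs. 0 < cmass c" using Suc.prems(1) by (simp add: Inv_def)
  note sp = step_props[OF pos Suc.prems(2) Suc.prems(3)]
  have tts: "time_to_single (Suc f) cs = ?tau + time_to_single f ?cs'"
    using Suc.prems(3) by (simp add: step_def Let_def)
  have Ie: "Inv n x (t + ?tau) ?es" by (rule Inv_evolve[OF Suc.prems(1)])
  have I': "Inv n x (t + ?tau) ?cs'" by (rule Inv_merge[OF Ie])
  show ?case
  proof (cases "2 \<le> length ?cs'")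
    case True
    have "length ?cs' \<le> Suc f" using sp(3) Suc.prems(4) by simp
    from Suc.IH[OF I' sp(2) True this] obtain k where
      "0 \<le> time_to_single f ?cs'" "0 < k" "k < n" "real k / real n * P0 n x n =
        P0 n x k + real k / real n * (1 - real k / real n) * (t + ?tau + time_to_single f ?cs')^2 / 2"
      by blast
    then show ?thesis using tts sp(1) by (intro conjI exI[of _ k]) (auto simp: add.assoc)
  next
    case False
    then have z: "time_to_single f ?cs' = 0" by (cases f) auto
    have "2 \<le> length ?es" using Suc.prems(3) by simp
    from final_formula[OF Ie this] False obtain k where
      "0 < k" "k < n" "real k / real n * P0 n x n =
        P0 n x k + real k / real n * (1 - real k / real n) * (t + ?tau)^2 / 2"
      by auto
    then show ?thesis using tts z sp(1) by (intro conjI exI[of _ k]) auto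
  qed
qed

lemma init_len [simp]: "length (init_state n x) = n"
  by (simp add: init_state_def)

lemma init_comps:
  assumes "l < n"
  shows "cmass (init_state n x ! l) = 1 / real n"
    "cpos (init_state n x ! l) = (\<Sum>i=1..Suc l. x i) / real n"
    "cvel (init_state n x ! l) = 0"
proof -
  have "init_state n x ! l = (1 / real n, (\<Sum>i=1..Suc l. x i) / real n, 0)"
    using assms unfolding init_state_def by (subst nth_map) (simp_all add: nth_upt del: upt_Suc)
  then show "cmass (init_state n x ! l) = 1 / real n"
    "cpos (init_state n x ! l) = (\<Sum>i=1..Suc l. x i) / real n"
    "cvel (init_state n x ! l) = 0"
    by (simp_all add: cmass_def cpos_def cvel_def)
qed

lemma Inv_init:
  assumes n: "1 \<le> n"
  shows "Inv n x 0 (init_state n x)"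
  unfolding Inv_def
proof (intro conjI allI impI)
  show "\<forall>c\<in>set (init_state n x). 0 < cmass c"
    by (auto simp: init_state_def cmass_def)
  show "sum_list (map cmass (init_state n x)) = 1"
    using psum_length[of cmass "init_state n x"] psum_nth[of n "init_state n x" cmass] n
    by (simp add: init_comps)
  fix i assume i: "i \<le> length (init_state n x)"
  then have i': "i \<le> n" by simp
  show "\<exists>k\<le>n. psum cmass (init_state n x) i = real k / real n \<and>
        psum (\<lambda>c. cmass c * cpos c) (init_state n x) i = P0 n x k + real k / real n * (1 - real k / real n) * 0\<^sup>2 / 2 \<and>
        psum (\<lambda>c. cmass c * cvel c) (init_state n x) i = real k / real n * (1 - real k / real n) * 0"
  proof (intro exI[of _ i] conjI)
    show "i \<le> n" by fact
    show "psum cmass (init_state n x) i = real i / real n"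
      using psum_nth[OF i, of cmass] i' by (simp add: init_comps)
    have "psum (\<lambda>c. cmass c * cpos c) (init_state n x) i = (\<Sum>l<i. 1 / real n * ((\<Sum>j=1..Suc l. x j) / real n))"
      using psum_nth[OF i] i' by (simp add: init_comps)
    also have "\<dots> = P0 n x i" unfolding P0_def
      using sum.atLeast1_atMost_eq[of "\<lambda>j. 1 / real n * ((\<Sum>i=1..j. x i) / real n)" i] by simp
    finally show "psum (\<lambda>c. cmass c * cpos c) (init_state n x) i = P0 n x i + real i / real n * (1 - real i / real n) * 0\<^sup>2 / 2"
      by simp
    show "psum (\<lambda>c. cmass c * cvel c) (init_state n x) i = real i / real n * (1 - real i / real n) * 0"
      using psum_nth[OF i] i' by (simp add: init_comps)
  qed
qed

lemma sorted_init:
  assumes "\<And>i. 1 \<le> i \<Longrightarrow> i \<le> n \<Longrightarrow> 0 \<le> x i"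
  shows "sorted (map cpos (init_state n x))"
  unfolding sorted_iff_nth_Suc
proof (intro allI impI)
  fix l assume "Suc l < length (map cpos (init_state n x))"
  then have l: "Suc l < n" by simp
  have "(\<Sum>i=1..Suc l. x i) \<le> (\<Sum>i=1..Suc (Suc l). x i)"
    using assms[of "Suc (Suc l)"] l by (simp add: sum.cl_ivl_Suc)
  then show "map cpos (init_state n x) ! l \<le> map cpos (init_state n x) ! Suc l"
    using l by (simp add: init_comps divide_right_mono)
qed

theorem T_last_char:
  assumes n: "2 \<le> n" and x: "\<And>i. 1 \<le> i \<Longrightarrow> i \<le> n \<Longrightarrow> 0 \<le> x i"
  shows "0 \<le> T_last n x \<and> (\<exists>k. 0 < k \<and> k < n \<and> real k / real n * P0 n x n =
        P0 n x k + real k / real n * (1 - real k / real n) * (T_last n x)^2 / 2)"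
  using run[OF Inv_init sorted_init, of n x n] n x unfolding T_last_def by simp


context prob_space begin

lemma idist_integrable:
  fixes X :: "nat \<Rightarrow> 'a \<Rightarrow> real" and g :: "real \<Rightarrow> real"
  assumes rv: "\<And>i. X i \<in> borel_measurable M"
    and d: "\<And>i. distr M borel (X i) = distr M borel (X 0)"
    and g: "g \<in> borel_measurable borel"
  shows "integrable M (\<lambda>\<omega>. g (X i \<omega>)) = integrable M (\<lambda>\<omega>. g (X 0 \<omega>))"
    "integral\<^sup>L M (\<lambda>\<omega>. g (X i \<omega>)) = integral\<^sup>L M (\<lambda>\<omega>. g (X 0 \<omega>))"
proof -
  have "integrable M (\<lambda>\<omega>. g (X i \<omega>)) = integrable (distr M borel (X i)) g"
    using integrable_distr_eq[OF rv[of i] g] by simp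
  also have "\<dots> = integrable (distr M borel (X 0)) g" by (simp only: d[of i])
  also have "\<dots> = integrable M (\<lambda>\<omega>. g (X 0 \<omega>))"
    using integrable_distr_eq[OF rv[of 0] g] by simp
  finally show "integrable M (\<lambda>\<omega>. g (X i \<omega>)) = integrable M (\<lambda>\<omega>. g (X 0 \<omega>))" .
  have "integral\<^sup>L M (\<lambda>\<omega>. g (X i \<omega>)) = integral\<^sup>L (distr M borel (X i)) g"
    using integral_distr[OF rv[of i] g] by simp
  also have "\<dots> = integral\<^sup>L (distr M borel (X 0)) g" by (simp only: d[of i])
  also have "\<dots> = integral\<^sup>L M (\<lambda>\<omega>. g (X 0 \<omega>))"
    using integral_distr[OF rv[of 0] g] by simp
  finally show "integral\<^sup>L M (\<lambda>\<omega>. g (X i \<omega>)) = integral\<^sup>L M (\<lambda>\<omega>. g (X 0 \<omega>))" .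
qed

lemma var_sum:
  fixes X :: "nat \<Rightarrow> 'a \<Rightarrow> real"
  assumes ind: "indep_vars (\<lambda>_. borel) X UNIV"
    and d: "\<And>i. distr M borel (X i) = distr M borel (X 0)"
    and int1: "integrable M (X 0)"
    and int2: "integrable M (\<lambda>\<omega>. (X 0 \<omega>)^2)"
    and mean: "integral\<^sup>L M (X 0) = 1"
    and I: "finite I"
  shows "integrable M (\<lambda>\<omega>. (\<Sum>i\<in>I. X i \<omega> - 1)^2)"
    "integral\<^sup>L M (\<lambda>\<omega>. (\<Sum>i\<in>I. X i \<omega> - 1)^2) = card I * integral\<^sup>L M (\<lambda>\<omega>. (X 0 \<omega> - 1)^2)"
    "integral\<^sup>L M (\<lambda>\<omega>. \<Sum>i\<in>I. X i \<omega> - 1) = 0"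
    "integrable M (\<lambda>\<omega>. \<Sum>i\<in>I. X i \<omega> - 1)"
proof -
  have rv: "X i \<in> borel_measurable M" for i using ind unfolding indep_vars_def by simp
  define Y where "Y = (\<lambda>i \<omega>. X i \<omega> - 1)"
  define V where "V = integral\<^sup>L M (\<lambda>\<omega>. (X 0 \<omega> - 1)^2)"
  have intX: "integrable M (X i)" for i
    using idist_integrable(1)[where X=X, OF rv d, of "\<lambda>x. x" i] int1 by simp
  have intY: "integrable M (Y i)" for i
    unfolding Y_def using intX[of i] by simp
  have EY: "integral\<^sup>L M (Y i) = 0" for i
  proof -
    have "integral\<^sup>L M (X i) = 1"
      using idist_integrable(2)[where X=X, OF rv d, of "\<lambda>x. x" i] mean by simp
    then show ?thesis unfolding Y_def using intX[of i] prob_space by simp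
  qed
  have intY0: "integrable M (\<lambda>\<omega>. (X 0 \<omega> - 1)^2)"
  proof -
    have "(\<lambda>\<omega>. (X 0 \<omega> - 1)^2) = (\<lambda>\<omega>. (X 0 \<omega>)^2 - 2 * X 0 \<omega> + 1)"
      by (simp add: power2_eq_square algebra_simps)
    then show ?thesis using int1 int2 by simp
  qed
  have intY2: "integrable M (\<lambda>\<omega>. Y i \<omega> * Y i \<omega>)" for i
    using idist_integrable(1)[where X=X, OF rv d, of "\<lambda>x. (x - 1)^2" i] intY0
    by (simp add: Y_def power2_eq_square)
  have EY2: "integral\<^sup>L M (\<lambda>\<omega>. Y i \<omega> * Y i \<omega>) = V" for i
    using idist_integrable(2)[where X=X, OF rv d, of "\<lambda>x. (x - 1)^2" i]
    by (simp add: Y_def V_def power2_eq_square)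
  have indY: "indep_vars (\<lambda>_. borel) Y UNIV"
    unfolding Y_def by (rule indep_vars_compose2[OF ind]) simp
  have pair: "indep_var borel (Y a) borel (Y b)" if "a \<noteq> b" for a b
  proof -
    have "indep_vars (\<lambda>_. borel) Y (insert a {b})" by (rule indep_vars_subset[OF indY]) simp
    from indep_vars_sum[OF _ _ this] that show ?thesis by simp
  qed
  have intYY: "integrable M (\<lambda>\<omega>. Y a \<omega> * Y b \<omega>)" for a b
    using intY2[of a] pair[of a b] intY[of a] intY[of b] indep_var_integrable by (cases "a = b") auto
  have EYY: "integral\<^sup>L M (\<lambda>\<omega>. Y a \<omega> * Y b \<omega>) = (if a = b then V else 0)" for a b
  proof (cases "a = b")
    case True then show ?thesis using EY2[of a] by simp
  next
    case False
    then show ?thesis using indep_var_lebesgue_integral[OF pair[OF False] intY[of a] intY[of b]] EY[of a] by simp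
  qed
  have sq: "(\<lambda>\<omega>. (\<Sum>i\<in>I. X i \<omega> - 1)^2) = (\<lambda>\<omega>. \<Sum>a\<in>I. \<Sum>b\<in>I. Y a \<omega> * Y b \<omega>)"
    by (simp add: Y_def power2_eq_square sum_product)
  show "integrable M (\<lambda>\<omega>. (\<Sum>i\<in>I. X i \<omega> - 1)^2)"
    unfolding sq using intYY by simp
  have "integral\<^sup>L M (\<lambda>\<omega>. \<Sum>a\<in>I. \<Sum>b\<in>I. Y a \<omega> * Y b \<omega>) = (\<Sum>a\<in>I. \<Sum>b\<in>I. integral\<^sup>L M (\<lambda>\<omega>. Y a \<omega> * Y b \<omega>))"
    using intYY by (simp add: integrable_sum)
  also have "\<dots> = (\<Sum>a\<in>I. V)" using I by (simp add: EYY)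
  finally show "integral\<^sup>L M (\<lambda>\<omega>. (\<Sum>i\<in>I. X i \<omega> - 1)^2) = card I * integral\<^sup>L M (\<lambda>\<omega>. (X 0 \<omega> - 1)^2)"
    unfolding sq V_def by simp
  have sY: "(\<lambda>\<omega>. \<Sum>i\<in>I. X i \<omega> - 1) = (\<lambda>\<omega>. \<Sum>i\<in>I. Y i \<omega>)" by (simp add: Y_def)
  show "integral\<^sup>L M (\<lambda>\<omega>. \<Sum>i\<in>I. X i \<omega> - 1) = 0"
    unfolding sY using intY EY by (simp add: integral_sum)
  show "integrable M (\<lambda>\<omega>. \<Sum>i\<in>I. X i \<omega> - 1)"
    unfolding sY using intY by simp
qed

end

lemma Q_bound:
  fixes x :: "nat \<Rightarrow> real" and \<delta> T :: real
  assumes k: "0 < k" "k < n"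
    and E: "\<And>j. 1 \<le> j \<Longrightarrow> j \<le> n \<Longrightarrow> \<bar>(\<Sum>i=1..j. x i) - real j\<bar> \<le> \<delta> * real n"
    and eq: "real k / real n * P0 n x n = P0 n x k + real k / real n * (1 - real k / real n) * T^2 / 2"
  shows "\<bar>T^2 - 1\<bar> \<le> 4 * \<delta>"
proof -
  define e where "e j = (\<Sum>i=1..j. x i) - real j" for j
  define F where "F m = (\<Sum>j=1..m. e j)" for m
  define G where "G m = (\<Sum>j=1..m. real j)" for m
  have n0: "0 < n" using k by simp
  have G2: "2 * G m = real m * (real m + 1)" for m
    using double_gauss_sum_from_Suc_0[where 'a=real, of m] by (simp add: G_def)
  have P0e: "P0 n x m = (G m + F m) / (real n)^2" for m
  proof -
    have "P0 n x m = (\<Sum>j=1..m. (real j + e j)) / (real n)^2"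
      unfolding P0_def e_def by (simp add: sum_divide_distrib power2_eq_square)
    also have "\<dots> = (G m + F m) / (real n)^2" by (simp add: G_def F_def sum.distrib)
    finally show ?thesis .
  qed
  have Fsplit: "F n = F k + (\<Sum>j\<in>{Suc k..n}. e j)"
  proof -
    have "{1..n} = {1..k} \<union> {Suc k..n}" using k by auto
    then show ?thesis unfolding F_def by (simp add: sum.union_disjoint)
  qed
  have Ebound: "\<bar>e j\<bar> \<le> \<delta> * real n" if "1 \<le> j" "j \<le> n" for j
    using E[OF that] by (simp add: e_def)
  have b1: "\<bar>F k\<bar> \<le> real k * (\<delta> * real n)"
  proof -
    have "\<bar>F k\<bar> \<le> (\<Sum>j=1..k. \<bar>e j\<bar>)" unfolding F_def by (rule sum_abs)
    also have "\<dots> \<le> real (card {1..k}) * (\<delta> * real n)"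
      using k by (intro sum_bounded_above) (auto intro: Ebound)
    finally show ?thesis by simp
  qed
  have b2: "\<bar>F n - F k\<bar> \<le> real (n - k) * (\<delta> * real n)"
  proof -
    have "\<bar>F n - F k\<bar> \<le> (\<Sum>j\<in>{Suc k..n}. \<bar>e j\<bar>)" unfolding Fsplit by (simp add: sum_abs)
    also have "\<dots> \<le> real (card {Suc k..n}) * (\<delta> * real n)"
      using k by (intro sum_bounded_above) (auto intro: Ebound)
    finally show ?thesis by simp
  qed
  define N where "N = real n"
  define K where "K = real k"
  have N0: "0 < N" using n0 by (simp add: N_def)
  have KN: "0 < K" "K < N" using k by (simp_all add: K_def N_def)
  have nk: "real (n - k) = N - K" using k by (simp add: N_def K_def)
  have eq2: "K / N * ((G n + F n) / N^2) = (G k + F k) / N^2 + K / N * (1 - K / N) * T^2 / 2"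
    using eq unfolding P0e N_def K_def .
  have c1: "2 * N^3 * (K / N * ((G n + F n) / N^2)) = 2 * K * (G n + F n)"
    using N0 by (simp add: power3_eq_cube power2_eq_square field_simps)
  have c2: "2 * N^3 * ((G k + F k) / N^2 + K / N * (1 - K / N) * T^2 / 2) =
      2 * N * (G k + F k) + N * K * (N - K) * T^2"
    using N0 by (simp add: power3_eq_cube power2_eq_square field_simps)
  have c3: "2 * N^3 * (K / N * ((G n + F n) / N^2)) = 2 * N^3 * ((G k + F k) / N^2 + K / N * (1 - K / N) * T^2 / 2)"
    by (simp only: eq2)
  have eq3: "2 * K * (G n + F n) = 2 * N * (G k + F k) + N * K * (N - K) * T^2"
    using c1 c2 c3 by linarith
  have Gn: "2 * G n = N * (N + 1)" using G2[of n] by (simp add: N_def)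
  have Gk: "2 * G k = K * (K + 1)" using G2[of k] by (simp add: K_def)
  have key: "N * K * (N - K) * (T^2 - 1) = 2 * K * (F n - F k) - 2 * (N - K) * F k"
  proof -
    have "2 * K * (G n + F n) = K * (2 * G n) + 2 * K * F n" by (simp add: algebra_simps)
    also have "\<dots> = K * (N * (N + 1)) + 2 * K * F n" by (simp add: Gn)
    finally have l: "2 * K * (G n + F n) = K * (N * (N + 1)) + 2 * K * F n" .
    have r: "2 * N * (G k + F k) = N * (K * (K + 1)) + 2 * N * F k"
      using Gk by (simp add: algebra_simps)
    show ?thesis using eq3 l r by (simp add: algebra_simps)
  qed
  have "\<bar>2 * K * (F n - F k) - 2 * (N - K) * F k\<bar> \<le> 2 * K * \<bar>F n - F k\<bar> + 2 * (N - K) * \<bar>F k\<bar>"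
    using KN by (simp add: abs_mult abs_triangle_ineq4 order_trans[OF abs_triangle_ineq4])
  also have "\<dots> \<le> 2 * K * ((N - K) * (\<delta> * N)) + 2 * (N - K) * (K * (\<delta> * N))"
    using b1 b2 KN unfolding nk N_def[symmetric] K_def[symmetric]
    by (intro add_mono mult_left_mono) auto
  also have "\<dots> = (N * K * (N - K)) * (4 * \<delta>)" by (simp add: algebra_simps)
  finally have fin: "\<bar>2 * K * (F n - F k) - 2 * (N - K) * F k\<bar> \<le> (N * K * (N - K)) * (4 * \<delta>)" .
  have pos: "0 < N * K * (N - K)" using KN N0 by simp
  have "\<bar>2 * K * (F n - F k) - 2 * (N - K) * F k\<bar> = (N * K * (N - K)) * \<bar>T^2 - 1\<bar>"
  proof -
    have "\<bar>N * K * (N - K) * (T^2 - 1)\<bar> = \<bar>N * K * (N - K)\<bar> * \<bar>T^2 - 1\<bar>" by (rule abs_mult)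
    also have "\<bar>N * K * (N - K)\<bar> = N * K * (N - K)" using pos by simp
    finally show ?thesis unfolding key .
  qed
  with fin have "(N * K * (N - K)) * \<bar>T^2 - 1\<bar> \<le> (N * K * (N - K)) * (4 * \<delta>)" by simp
  then show ?thesis using pos by (simp only: mult_le_cancel_left_pos)
qed

lemma abs_sub1_le: "0 \<le> (T::real) \<Longrightarrow> \<bar>T - 1\<bar> \<le> \<bar>T^2 - 1\<bar>"
proof -
  assume T: "0 \<le> T"
  have "T^2 - 1 = (T - 1) * (T + 1)" by (simp add: power2_eq_square algebra_simps)
  then have "\<bar>T^2 - 1\<bar> = \<bar>T - 1\<bar> * (T + 1)" using T by (simp add: abs_mult)
  then show ?thesis using T by (simp add: mult_le_cancel_left1)
qed

lemma grid:
  fixes S :: "nat \<Rightarrow> real"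
  assumes mono: "\<And>i j. i \<le> j \<Longrightarrow> j \<le> n \<Longrightarrow> S i \<le> S j" and m: "1 \<le> m"
    and G: "\<And>r. r \<le> m \<Longrightarrow> \<bar>S (r * n div m) - real (r * n div m)\<bar> \<le> a"
    and j: "j \<le> n"
  shows "\<bar>S j - real j\<bar> \<le> a + real n / real m + 1"
proof (cases "j = n")
  case True
  have "m * n div m = n" using m by simp
  then have "\<bar>S j - real j\<bar> \<le> a" using G[of m] True by simp
  moreover have "0 \<le> real n / real m" by simp
  ultimately show ?thesis by linarith
next
  case False
  then have jn: "j < n" using j by simp
  define r where "r = j * m div n"
  define lo where "lo = r * n div m"
  define hi where "hi = Suc r * n div m"
  have rm: "r < m" unfolding r_def using jn m
    by (simp add: div_less_iff_less_mult)
  have "r * n \<le> j * m" unfolding r_def by (simp add: div_times_less_eq_dividend)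
  then have "lo \<le> j * m div m" unfolding lo_def by (rule div_le_mono)
  then have lo: "lo \<le> j" using m by simp
  have n0: "0 < n" using jn by simp
  have md: "j * m mod n < n" using n0 by simp
  have de: "r * n + j * m mod n = j * m" unfolding r_def by (rule div_mult_mod_eq)
  have "j * m < Suc r * n" using md de by simp
  then have "j * m div m \<le> hi" unfolding hi_def by (intro div_le_mono) simp
  then have hi: "j \<le> hi" using m by simp
  have hin: "hi \<le> n"
  proof -
    have "Suc r \<le> m" using rm by simp
    then have "Suc r * n \<le> m * n" by (rule mult_le_mono1)
    then have "hi \<le> m * n div m" unfolding hi_def by (rule div_le_mono)
    then show ?thesis using m by simp
  qed
  have hr: "real hi \<le> real (Suc r * n) / real m" unfolding hi_def by (rule of_nat_div_le_of_nat)
  have lr: "real (r * n) / real m < real lo + 1"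
  proof -
    have md2: "r * n mod m < m" using m by simp
    have de2: "lo * m + r * n mod m = r * n" unfolding lo_def by (rule div_mult_mod_eq)
    have "r * n < m * (lo + 1)" using md2 de2 by (simp add: algebra_simps)
    then have "real (r * n) < real m * (real lo + 1)"
      by (metis of_nat_1 of_nat_add of_nat_less_iff of_nat_mult)
    then show ?thesis using m by (simp add: divide_less_eq mult.commute)
  qed
  have gap: "real hi - real lo \<le> real n / real m + 1"
  proof -
    have "real (Suc r * n) / real m = real (r * n) / real m + real n / real m"
      by (simp add: add_divide_distrib algebra_simps)
    then show ?thesis using hr lr by linarith
  qed
  have "S j \<le> S hi" using mono[OF hi hin] .
  moreover have "S lo \<le> S j" using mono[OF lo j] .
  moreover have "\<bar>S hi - real hi\<bar> \<le> a" using G[of "Suc r"] rm unfolding hi_def by simp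
  moreover have "\<bar>S lo - real lo\<bar> \<le> a" using G[of r] rm unfolding lo_def by simp
  moreover have "real lo \<le> real j" "real j \<le> real hi" using lo hi by simp_all
  ultimately show ?thesis using gap unfolding abs_le_iff by linarith
qed


definition getc :: "cluster list \<Rightarrow> nat \<Rightarrow> cluster" where
  "getc xs i = (if i < length xs then xs ! i else (0, 0, 0))"

definition MC :: "'a measure \<Rightarrow> ('a \<Rightarrow> cluster) \<Rightarrow> bool" where
  "MC M c \<longleftrightarrow> (\<lambda>\<omega>. cmass (c \<omega>)) \<in> borel_measurable M \<and> (\<lambda>\<omega>. cpos (c \<omega>)) \<in> borel_measurable M
      \<and> (\<lambda>\<omega>. cvel (c \<omega>)) \<in> borel_measurable M"

definition LMS :: "'a measure \<Rightarrow> ('a \<Rightarrow> cluster list) \<Rightarrow> bool" where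
  "LMS M F \<longleftrightarrow> (\<exists>N. \<forall>\<omega>\<in>space M. length (F \<omega>) \<le> N) \<and>
      (\<lambda>\<omega>. real (length (F \<omega>))) \<in> borel_measurable M \<and> (\<forall>i. MC M (\<lambda>\<omega>. getc (F \<omega>) i))"

lemma list_getc: "map (getc xs) [0..<length xs] = xs"
  by (rule nth_equalityI) (simp_all add: getc_def)

lemma piece_real:
  fixes h :: "'a \<Rightarrow> real" and G :: "nat \<Rightarrow> 'a \<Rightarrow> real"
  assumes B: "\<forall>\<omega>\<in>space M. length (F \<omega>) \<le> N"
    and Lm: "(\<lambda>\<omega>. real (length (F \<omega>))) \<in> borel_measurable M"
    and G: "\<And>L. L \<le> N \<Longrightarrow> G L \<in> borel_measurable M"
    and E: "\<And>\<omega>. \<omega> \<in> space M \<Longrightarrow> h \<omega> = G (length (F \<omega>)) \<omega>"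
  shows "h \<in> borel_measurable M"
proof -
  have m: "(\<lambda>\<omega>. \<Sum>L\<le>N. (if real (length (F \<omega>)) = real L then G L \<omega> else 0)) \<in> borel_measurable M"
  proof (intro borel_measurable_sum measurable_If)
    fix L assume "L \<in> {..N}"
    then show "G L \<in> borel_measurable M" using G by simp
    show "(\<lambda>\<omega>. 0::real) \<in> borel_measurable M" by simp
    show "{\<omega> \<in> space M. real (length (F \<omega>)) = real L} \<in> sets M"
      using measurable_equality_set[OF Lm, of "\<lambda>_. real L"] by simp
  qed
  have eq: "h \<omega> = (\<Sum>L\<le>N. (if real (length (F \<omega>)) = real L then G L \<omega> else 0))" if "\<omega> \<in> space M" for \<omega>
  proof -
    have "(\<Sum>L\<le>N. (if real (length (F \<omega>)) = real L then G L \<omega> else 0)) =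
          (\<Sum>L\<le>N. (if length (F \<omega>) = L then G L \<omega> else 0))" by simp
    also have "\<dots> = G (length (F \<omega>)) \<omega>" using B that by (simp add: sum.delta')
    finally show ?thesis using E[OF that] by simp
  qed
  have "h \<in> borel_measurable M \<longleftrightarrow> (\<lambda>\<omega>. \<Sum>L\<le>N. (if real (length (F \<omega>)) = real L then G L \<omega> else 0)) \<in> borel_measurable M"
    by (rule measurable_cong) (rule eq)
  with m show ?thesis by simp
qed

lemma LMS_real:
  fixes h :: "'a \<Rightarrow> real"
  assumes F: "LMS M F"
    and G: "\<And>L. \<exists>G \<in> borel_measurable M. \<forall>\<omega>\<in>space M. length (F \<omega>) = L \<longrightarrow> h \<omega> = G \<omega>"
  shows "h \<in> borel_measurable M"
proof -
  obtain N where N: "\<forall>\<omega>\<in>space M. length (F \<omega>) \<le> N" using F by (auto simp: LMS_def)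
  from G obtain GG where GG: "\<And>L. GG L \<in> borel_measurable M \<and> (\<forall>\<omega>\<in>space M. length (F \<omega>) = L \<longrightarrow> h \<omega> = GG L \<omega>)"
    by metis
  show ?thesis
    by (rule piece_real[OF N, of GG]) (use F GG in \<open>auto simp: LMS_def\<close>)
qed

lemma LMS_piece:
  assumes F: "LMS M F"
    and G: "\<And>L. \<exists>G. LMS M G \<and> (\<forall>\<omega>\<in>space M. length (F \<omega>) = L \<longrightarrow> K \<omega> = G \<omega>)"
  shows "LMS M K"
proof -
  obtain N where N: "\<forall>\<omega>\<in>space M. length (F \<omega>) \<le> N" using F by (auto simp: LMS_def)
  from G obtain GG where GG: "\<And>L. LMS M (GG L) \<and> (\<forall>\<omega>\<in>space M. length (F \<omega>) = L \<longrightarrow> K \<omega> = GG L \<omega>)"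
    by metis
  have "\<exists>B. \<forall>\<omega>\<in>space M. length (GG L \<omega>) \<le> B" for L using GG[of L] by (auto simp: LMS_def)
  then obtain BB where BB: "\<And>L. \<forall>\<omega>\<in>space M. length (GG L \<omega>) \<le> BB L" by metis
  have Kb: "\<forall>\<omega>\<in>space M. length (K \<omega>) \<le> (\<Sum>L\<le>N. BB L)"
  proof
    fix \<omega> assume w: "\<omega> \<in> space M"
    have "K \<omega> = GG (length (F \<omega>)) \<omega>" using GG w by blast
    then have "length (K \<omega>) \<le> BB (length (F \<omega>))" using BB w by simp
    also have "\<dots> \<le> (\<Sum>L\<le>N. BB L)" using N w by (intro member_le_sum) auto
    finally show "length (K \<omega>) \<le> (\<Sum>L\<le>N. BB L)" .
  qed
  have gen: "(\<lambda>\<omega>. q (K \<omega>)) \<in> borel_measurable M"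
    if q: "\<And>L. (\<lambda>\<omega>. q (GG L \<omega>)) \<in> borel_measurable M" for q :: "cluster list \<Rightarrow> real"
  proof (rule LMS_real[OF F])
    fix L show "\<exists>G\<in>borel_measurable M. \<forall>\<omega>\<in>space M. length (F \<omega>) = L \<longrightarrow> q (K \<omega>) = G \<omega>"
      using q[of L] GG[of L] by (intro bexI[of _ "\<lambda>\<omega>. q (GG L \<omega>)"]) auto
  qed
  show ?thesis unfolding LMS_def MC_def
  proof (intro conjI allI)
    show "\<exists>N. \<forall>\<omega>\<in>space M. length (K \<omega>) \<le> N" using Kb by blast
    show "(\<lambda>\<omega>. real (length (K \<omega>))) \<in> borel_measurable M"
      by (rule gen[of "\<lambda>xs. real (length xs)"]) (use GG in \<open>auto simp: LMS_def\<close>)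
    fix i
    show "(\<lambda>\<omega>. cmass (getc (K \<omega>) i)) \<in> borel_measurable M"
      by (rule gen[of "\<lambda>xs. cmass (getc xs i)"]) (use GG in \<open>auto simp: LMS_def MC_def\<close>)
    show "(\<lambda>\<omega>. cpos (getc (K \<omega>) i)) \<in> borel_measurable M"
      by (rule gen[of "\<lambda>xs. cpos (getc xs i)"]) (use GG in \<open>auto simp: LMS_def MC_def\<close>)
    show "(\<lambda>\<omega>. cvel (getc (K \<omega>) i)) \<in> borel_measurable M"
      by (rule gen[of "\<lambda>xs. cvel (getc xs i)"]) (use GG in \<open>auto simp: LMS_def MC_def\<close>)
  qed
qed

lemma MC_const: "MC M (\<lambda>\<omega>. c)" by (simp add: MC_def)

lemma MC_if: "{\<omega>\<in>space M. P \<omega>} \<in> sets M \<Longrightarrow> MC M a \<Longrightarrow> MC M b \<Longrightarrow> MC M (\<lambda>\<omega>. if P \<omega> then a \<omega> else b \<omega>)"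
  unfolding MC_def by (auto intro!: measurable_If simp: if_distrib)

lemma LMS_fixed:
  assumes "\<And>i. i < L \<Longrightarrow> MC M (g i)"
  shows "LMS M (\<lambda>\<omega>. map (\<lambda>i. g i \<omega>) [0..<L])"
  unfolding LMS_def
proof (intro conjI allI)
  show "\<exists>N. \<forall>\<omega>\<in>space M. length (map (\<lambda>i. g i \<omega>) [0..<L]) \<le> N" by auto
  show "(\<lambda>\<omega>. real (length (map (\<lambda>i. g i \<omega>) [0..<L]))) \<in> borel_measurable M" by simp
  fix i
  have "(\<lambda>\<omega>. getc (map (\<lambda>i. g i \<omega>) [0..<L]) i) = (\<lambda>\<omega>. if i < L then g i \<omega> else (0,0,0))"
    by (auto simp: getc_def)
  then show "MC M (\<lambda>\<omega>. getc (map (\<lambda>i. g i \<omega>) [0..<L]) i)"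
    using assms[of i] by (cases "i < L") (simp_all add: MC_const)
qed

lemma LMS_cons:
  assumes c: "MC M c" and F: "LMS M F"
  shows "LMS M (\<lambda>\<omega>. c \<omega> # F \<omega>)"
  unfolding LMS_def
proof (intro conjI allI)
  obtain N where N: "\<forall>\<omega>\<in>space M. length (F \<omega>) \<le> N" using F by (auto simp: LMS_def)
  then show "\<exists>N. \<forall>\<omega>\<in>space M. length (c \<omega> # F \<omega>) \<le> N" by (intro exI[of _ "Suc N"]) auto
  have "(\<lambda>\<omega>. real (length (F \<omega>))) \<in> borel_measurable M" using F by (simp add: LMS_def)
  then have "(\<lambda>\<omega>. 1 + real (length (F \<omega>))) \<in> borel_measurable M" by simp
  then show "(\<lambda>\<omega>. real (length (c \<omega> # F \<omega>))) \<in> borel_measurable M" by simp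
  fix i
  show "MC M (\<lambda>\<omega>. getc (c \<omega> # F \<omega>) i)"
  proof (cases i)
    case 0
    then have "(\<lambda>\<omega>. getc (c \<omega> # F \<omega>) i) = c" by (simp add: getc_def fun_eq_iff)
    then show ?thesis using c by simp
  next
    case (Suc j)
    then have "(\<lambda>\<omega>. getc (c \<omega> # F \<omega>) i) = (\<lambda>\<omega>. getc (F \<omega>) j)" by (simp add: getc_def fun_eq_iff)
    then show ?thesis using F by (simp add: LMS_def)
  qed
qed

lemma LMS_if:
  assumes P: "{\<omega>\<in>space M. P \<omega>} \<in> sets M" and F: "LMS M F" and G: "LMS M G"
  shows "LMS M (\<lambda>\<omega>. if P \<omega> then F \<omega> else G \<omega>)"
  unfolding LMS_def
proof (intro conjI allI)
  obtain N1 where N1: "\<forall>\<omega>\<in>space M. length (F \<omega>) \<le> N1" using F by (auto simp: LMS_def)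
  obtain N2 where N2: "\<forall>\<omega>\<in>space M. length (G \<omega>) \<le> N2" using G by (auto simp: LMS_def)
  show "\<exists>N. \<forall>\<omega>\<in>space M. length (if P \<omega> then F \<omega> else G \<omega>) \<le> N"
    using N1 N2 by (intro exI[of _ "N1 + N2"]) auto
  show "(\<lambda>\<omega>. real (length (if P \<omega> then F \<omega> else G \<omega>))) \<in> borel_measurable M"
  proof -
    have "(\<lambda>\<omega>. if P \<omega> then real (length (F \<omega>)) else real (length (G \<omega>))) \<in> borel_measurable M"
      using F G P by (intro measurable_If) (simp_all add: LMS_def)
    then show ?thesis by (simp add: if_distrib)
  qed
  fix i
  have "(\<lambda>\<omega>. getc (if P \<omega> then F \<omega> else G \<omega>) i) = (\<lambda>\<omega>. if P \<omega> then getc (F \<omega>) i else getc (G \<omega>) i)"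
    by auto
  then show "MC M (\<lambda>\<omega>. getc (if P \<omega> then F \<omega> else G \<omega>) i)"
  proof -
    have "MC M (\<lambda>\<omega>. getc (F \<omega>) i)" "MC M (\<lambda>\<omega>. getc (G \<omega>) i)" using F G by (simp_all add: LMS_def)
    from MC_if[OF P this] show ?thesis unfolding \<open>(\<lambda>\<omega>. getc (if P \<omega> then F \<omega> else G \<omega>) i) = _\<close> .
  qed
qed


lemma combine_vel: "cvel (combine c1 c2) = (cmass c1 * cvel c1 + cmass c2 * cvel c2) / (cmass c1 + cmass c2)"
  by (simp add: combine_def cvel_def)

lemma MC_combine: "MC M a \<Longrightarrow> MC M b \<Longrightarrow> MC M (\<lambda>\<omega>. combine (a \<omega>) (b \<omega>))"
  unfolding MC_def combine_vel combine_mass combine_pos by auto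

lemma LMS_merge_fixed: "\<forall>g. (\<forall>i. MC M (g i)) \<longrightarrow> LMS M (\<lambda>\<omega>. merge (map (\<lambda>i. g i \<omega>) [0..<L]))"
proof (induction L rule: less_induct)
  case (less L)
  show ?case
  proof (intro allI impI)
    fix g :: "nat \<Rightarrow> 'a \<Rightarrow> cluster" assume g: "\<forall>i. MC M (g i)"
    show "LMS M (\<lambda>\<omega>. merge (map (\<lambda>i. g i \<omega>) [0..<L]))"
    proof (cases L)
      case 0
      then show ?thesis using LMS_fixed[of 0 M g] by simp
    next
      case (Suc L1)
      show ?thesis
      proof (cases L1)
        case 0
        then have "(\<lambda>\<omega>. merge (map (\<lambda>i. g i \<omega>) [0..<L])) = (\<lambda>\<omega>. map (\<lambda>i. g i \<omega>) [0..<L])"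
          using Suc by simp
        then show ?thesis using LMS_fixed[of L M g] g by simp
      next
        case (Suc L')
        then have L: "L = Suc (Suc L')" using \<open>L = Suc L1\<close> by simp
        define g' where "g' = (\<lambda>i \<omega>. if i = 0 then combine (g 0 \<omega>) (g 1 \<omega>) else g (Suc i) \<omega>)"
        have eqn: "merge (map (\<lambda>i. g i \<omega>) [0..<L]) =
            (if cpos (g 0 \<omega>) = cpos (g 1 \<omega>) then merge (map (\<lambda>i. g' i \<omega>) [0..<Suc L'])
             else g 0 \<omega> # merge (map (\<lambda>i. g (Suc i) \<omega>) [0..<Suc L']))" for \<omega>
          unfolding L map_upt_Suc g'_def by simp
        have mg': "\<forall>i. MC M (g' i)"
        proof
          fix i show "MC M (g' i)"
          proof (cases i)
            case 0
            then have "g' i = (\<lambda>\<omega>. combine (g 0 \<omega>) (g 1 \<omega>))" by (simp add: g'_def fun_eq_iff)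
            moreover have "MC M (\<lambda>\<omega>. combine (g 0 \<omega>) (g 1 \<omega>))"
              using g by (intro MC_combine) auto
            ultimately show ?thesis by simp
          next
            case (Suc j)
            then have "g' i = g (Suc i)" by (simp add: g'_def fun_eq_iff)
            then show ?thesis using g by simp
          qed
        qed
        have lt: "Suc L' < L" using L by simp
        have A: "LMS M (\<lambda>\<omega>. merge (map (\<lambda>i. g' i \<omega>) [0..<Suc L']))"
          by (rule less.IH[OF lt, THEN spec[of _ g'], THEN mp, OF mg'])
        have gS: "\<forall>i. MC M ((\<lambda>i. g (Suc i)) i)" using g by simp
        have B: "LMS M (\<lambda>\<omega>. merge (map (\<lambda>i. g (Suc i) \<omega>) [0..<Suc L']))"
          by (rule less.IH[OF lt, THEN spec[of _ "\<lambda>i. g (Suc i)"], THEN mp, OF gS])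
        have P: "{\<omega> \<in> space M. cpos (g 0 \<omega>) = cpos (g 1 \<omega>)} \<in> sets M"
          using g by (intro measurable_equality_set) (auto simp: MC_def)
        have "LMS M (\<lambda>\<omega>. if cpos (g 0 \<omega>) = cpos (g 1 \<omega>) then merge (map (\<lambda>i. g' i \<omega>) [0..<Suc L'])
             else g 0 \<omega> # merge (map (\<lambda>i. g (Suc i) \<omega>) [0..<Suc L']))"
        proof (rule LMS_if[OF P A])
          show "LMS M (\<lambda>\<omega>. g 0 \<omega> # merge (map (\<lambda>i. g (Suc i) \<omega>) [0..<Suc L']))"
            using g B by (intro LMS_cons) auto
        qed
        then show ?thesis unfolding eqn .
      qed
    qed
  qed
qed

lemma LMS_getcs: "LMS M F \<Longrightarrow> MC M (\<lambda>\<omega>. getc (F \<omega>) i)"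
  by (simp add: LMS_def)

lemma LMS_merge: "LMS M F \<Longrightarrow> LMS M (\<lambda>\<omega>. merge (F \<omega>))"
proof (rule LMS_piece)
  assume F: "LMS M F"
  fix L
  show "\<exists>G. LMS M G \<and> (\<forall>\<omega>\<in>space M. length (F \<omega>) = L \<longrightarrow> merge (F \<omega>) = G \<omega>)"
  proof (intro exI conjI)
    show "LMS M (\<lambda>\<omega>. merge (map (\<lambda>i. getc (F \<omega>) i) [0..<L]))"
    proof -
      have "\<forall>i. MC M ((\<lambda>i \<omega>. getc (F \<omega>) i) i)" using LMS_getcs[OF F] by blast
      from LMS_merge_fixed[of M L, THEN spec, THEN mp, OF this] show ?thesis .
    qed
    show "\<forall>\<omega>\<in>space M. length (F \<omega>) = L \<longrightarrow> merge (F \<omega>) = merge (map (\<lambda>i. getc (F \<omega>) i) [0..<L])"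
      using list_getc by metis
  qed
qed

definition accL :: "nat \<Rightarrow> cluster list \<Rightarrow> nat \<Rightarrow> real" where
  "accL L xs k = (\<Sum>i\<in>{k<..<L}. cmass (getc xs i)) - (\<Sum>i<k. cmass (getc xs i))"

lemma accL_eq: "length xs = L \<Longrightarrow> k < L \<Longrightarrow> accel xs k = accL L xs k"
  unfolding accel_def accL_def getc_def by (intro arg_cong2[where f="(-)"] sum.cong) auto

lemma accL_meas: "LMS M F \<Longrightarrow> (\<lambda>\<omega>. accL L (F \<omega>) k) \<in> borel_measurable M"
  unfolding accL_def using LMS_getcs[of M F] unfolding MC_def
  by (intro borel_measurable_diff borel_measurable_sum) auto

lemma LMS_evolve:
  assumes F: "LMS M F" and tau: "tau \<in> borel_measurable M"
  shows "LMS M (\<lambda>\<omega>. evolve (F \<omega>) (tau \<omega>))"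
proof (rule LMS_piece[OF F])
  fix L
  define EV where "EV = (\<lambda>k \<omega>. (cmass (getc (F \<omega>) k),
      cpos (getc (F \<omega>) k) + cvel (getc (F \<omega>) k) * tau \<omega> + accL L (F \<omega>) k * tau \<omega> ^ 2 / 2,
      cvel (getc (F \<omega>) k) + accL L (F \<omega>) k * tau \<omega>))"
  show "\<exists>G. LMS M G \<and> (\<forall>\<omega>\<in>space M. length (F \<omega>) = L \<longrightarrow> evolve (F \<omega>) (tau \<omega>) = G \<omega>)"
  proof (intro exI conjI)
    show "LMS M (\<lambda>\<omega>. map (\<lambda>k. EV k \<omega>) [0..<L])"
    proof (rule LMS_fixed)
      fix k
      have m: "(\<lambda>\<omega>. cmass (getc (F \<omega>) k)) \<in> borel_measurable M"
          "(\<lambda>\<omega>. cpos (getc (F \<omega>) k)) \<in> borel_measurable M"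
          "(\<lambda>\<omega>. cvel (getc (F \<omega>) k)) \<in> borel_measurable M"
        using LMS_getcs[OF F, of k] by (auto simp: MC_def)
      note a = accL_meas[OF F, of L k]
      show "MC M (EV k)" unfolding MC_def EV_def cmass_def[symmetric] cpos_def[symmetric] cvel_def[symmetric]
        using m a tau by (simp add: cmass_def cpos_def cvel_def)
    qed
    show "\<forall>\<omega>\<in>space M. length (F \<omega>) = L \<longrightarrow> evolve (F \<omega>) (tau \<omega>) = map (\<lambda>k. EV k \<omega>) [0..<L]"
    proof (intro ballI impI)
      fix \<omega> assume "\<omega> \<in> space M" "length (F \<omega>) = L"
      then show "evolve (F \<omega>) (tau \<omega>) = map (\<lambda>k. EV k \<omega>) [0..<L]"
        unfolding evolve_def EV_def using accL_eq[of "F \<omega>" L] by (auto simp: getc_def intro!: map_cong)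
    qed
  qed
qed


definition ctf :: "real \<Rightarrow> real \<Rightarrow> real \<Rightarrow> real" where
  "ctf A B D = (if A \<le> 0 then 0 else (B + sqrt (B^2 - 2*A*D)) / (-D))"

lemma ctf_meas:
  assumes "A \<in> borel_measurable M" "B \<in> borel_measurable M" "D \<in> borel_measurable M"
  shows "(\<lambda>\<omega>. ctf (A \<omega>) (B \<omega>) (D \<omega>)) \<in> borel_measurable M"
  unfolding ctf_def using assms by measurable

lemma coll_time_ctf:
  assumes pos: "\<forall>c\<in>set cs. 0 < cmass c" and k: "Suc k < length cs"
  shows "coll_time cs k = ctf (cpos (cs ! Suc k) - cpos (cs ! k)) (cvel (cs ! Suc k) - cvel (cs ! k))
            (accel cs (Suc k) - accel cs k)"
proof -
  have D: "accel cs (Suc k) - accel cs k < 0" unfolding accel_diff[OF k] using pos k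
    by (smt (verit, ccfv_SIG) Suc_lessD nth_mem)
  show ?thesis unfolding coll_time_def gap_fun_def ctf_def by (rule quad_inf[OF D])
qed

lemma nt_meas:
  assumes F: "LMS M F" and pos: "\<forall>\<omega>\<in>space M. \<forall>c\<in>set (F \<omega>). 0 < cmass c"
  shows "(\<lambda>\<omega>. next_time (F \<omega>)) \<in> borel_measurable M"
proof (rule LMS_real[OF F])
  fix L
  define CT where "CT = (\<lambda>k \<omega>. ctf (cpos (getc (F \<omega>) (Suc k)) - cpos (getc (F \<omega>) k))
      (cvel (getc (F \<omega>) (Suc k)) - cvel (getc (F \<omega>) k)) (accL L (F \<omega>) (Suc k) - accL L (F \<omega>) k))"
  have CTm: "CT k \<in> borel_measurable M" for k
  proof -
    have m: "MC M (\<lambda>\<omega>. getc (F \<omega>) i)" for i using LMS_getcs[OF F] .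
    show ?thesis unfolding CT_def
      using m[of k] m[of "Suc k"] accL_meas[OF F, of L k] accL_meas[OF F, of L "Suc k"]
      by (intro ctf_meas borel_measurable_diff) (auto simp: MC_def)
  qed
  show "\<exists>G\<in>borel_measurable M. \<forall>\<omega>\<in>space M. length (F \<omega>) = L \<longrightarrow> next_time (F \<omega>) = G \<omega>"
  proof (intro bexI ballI impI)
    show "(\<lambda>\<omega>. Min ((\<lambda>k. CT k \<omega>) ` {..<L - 1})) \<in> borel_measurable M"
    proof (cases "L - 1 = 0")
      case True then show ?thesis by simp
    next
      case False
      then show ?thesis using CTm by (intro borel_measurable_Min) auto
    qed
    fix \<omega> assume w: "\<omega> \<in> space M" and len: "length (F \<omega>) = L"
    have "coll_time (F \<omega>) k = CT k \<omega>" if "k \<in> {..<L - 1}" for k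
    proof -
      have k: "Suc k < length (F \<omega>)" using that len by auto
      show ?thesis unfolding coll_time_ctf[OF bspec[OF pos w] k] CT_def
        using k len accL_eq[of "F \<omega>" L k] accL_eq[of "F \<omega>" L "Suc k"] by (simp add: getc_def)
    qed
    then show "next_time (F \<omega>) = Min ((\<lambda>k. CT k \<omega>) ` {..<L - 1})"
      unfolding next_time_def len by (metis (no_types, lifting) image_cong)
  qed
qed

lemma evolve_pos: "\<forall>c\<in>set cs. 0 < cmass c \<Longrightarrow> \<forall>c\<in>set (evolve cs tau). 0 < cmass c"
proof
  fix c assume I: "\<forall>c\<in>set cs. 0 < cmass c" and "c \<in> set (evolve cs tau)"
  then obtain l where l: "l < length cs" "c = evolve cs tau ! l" by (auto simp: in_set_conv_nth)
  then have "cmass c = cmass (cs ! l)" by (simp add: evolve_comps)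
  moreover have "cs ! l \<in> set cs" using l by simp
  ultimately show "0 < cmass c" using I by simp
qed

lemma tts_meas:
  "\<forall>F. LMS M F \<and> (\<forall>\<omega>\<in>space M. \<forall>c\<in>set (F \<omega>). 0 < cmass c) \<longrightarrow>
     (\<lambda>\<omega>. time_to_single f (F \<omega>)) \<in> borel_measurable M"
proof (induction f)
  case 0 then show ?case by simp
next
  case (Suc f)
  show ?case
  proof (intro allI impI, elim conjE)
    fix F assume F: "LMS M F" and pos: "\<forall>\<omega>\<in>space M. \<forall>c\<in>set (F \<omega>). 0 < cmass c"
    define tau where "tau = (\<lambda>\<omega>. next_time (F \<omega>))"
    have taum: "tau \<in> borel_measurable M" unfolding tau_def by (rule nt_meas[OF F pos])
    define F' where "F' = (\<lambda>\<omega>. merge (evolve (F \<omega>) (tau \<omega>)))"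
    have F': "LMS M F'" unfolding F'_def by (intro LMS_merge LMS_evolve F taum)
    have pos': "\<forall>\<omega>\<in>space M. \<forall>c\<in>set (F' \<omega>). 0 < cmass c"
      unfolding F'_def using pos by (intro ballI merge_mass_pos evolve_pos) auto
    have IH: "(\<lambda>\<omega>. time_to_single f (F' \<omega>)) \<in> borel_measurable M" using Suc.IH F' pos' by blast
    have eq: "time_to_single (Suc f) (F \<omega>) = (if real (length (F \<omega>)) \<le> 1 then 0 else tau \<omega> + time_to_single f (F' \<omega>))" for \<omega>
      by (simp add: step_def Let_def tau_def F'_def)
    have lm: "(\<lambda>\<omega>. real (length (F \<omega>))) \<in> borel_measurable M" using F by (simp add: LMS_def)
    have S: "{\<omega> \<in> space M. real (length (F \<omega>)) \<le> 1} \<in> sets M" using lm by measurable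
    show "(\<lambda>\<omega>. time_to_single (Suc f) (F \<omega>)) \<in> borel_measurable M"
      unfolding eq using S taum IH by (intro measurable_If) auto
  qed
qed

lemma init_eq: "init_state n x = map (\<lambda>l. (1 / real n, (\<Sum>i=1..Suc l. x i) / real n, 0)) [0..<n]"
  unfolding init_state_def by (rule nth_equalityI) (simp_all add: nth_upt del: upt_Suc)

theorem T_last_meas:
  fixes X :: "nat \<Rightarrow> 'a \<Rightarrow> real"
  assumes X: "\<And>i. X i \<in> borel_measurable M"
  shows "(\<lambda>\<omega>. T_last n (\<lambda>i. X i \<omega>)) \<in> borel_measurable M"
proof -
  define F where "F = (\<lambda>\<omega>. init_state n (\<lambda>i. X i \<omega>))"
  have F: "LMS M F" unfolding F_def init_eq
  proof (rule LMS_fixed)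
    fix l
    show "MC M (\<lambda>\<omega>. (1 / real n, (\<Sum>i=1..Suc l. X i \<omega>) / real n, 0))"
      unfolding MC_def cmass_def cpos_def cvel_def using X by auto
  qed
  have pos: "\<forall>\<omega>\<in>space M. \<forall>c\<in>set (F \<omega>). 0 < cmass c"
    unfolding F_def by (auto simp: init_state_def cmass_def)
  show ?thesis unfolding T_last_def using tts_meas[of M n] F pos unfolding F_def by blast
qed


lemma det_main:
  fixes x :: "nat \<Rightarrow> real" and \<delta> :: real
  assumes n: "2 \<le> n" and m: "1 \<le> m" and x: "\<And>i. 1 \<le> i \<Longrightarrow> i \<le> n \<Longrightarrow> 0 \<le> x i"
    and hm: "real n / real m + 1 \<le> \<delta> * real n / 2"
    and G: "\<And>r. r \<le> m \<Longrightarrow> \<bar>\<Sum>i=1..(r * n div m). (x i - 1)\<bar> \<le> \<delta> * real n / 2"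
  shows "\<bar>T_last n x - 1\<bar> \<le> 4 * \<delta>"
proof -
  define S where "S j = (\<Sum>i=1..j. x i)" for j
  have mono: "S i \<le> S j" if "i \<le> j" "j \<le> n" for i j
    unfolding S_def using that x by (intro sum_mono2) auto
  have sub: "(\<Sum>i=1..j. (x i - 1)) = S j - real j" for j
    by (simp add: S_def sum_subtractf)
  have Gr: "\<bar>S (r * n div m) - real (r * n div m)\<bar> \<le> \<delta> * real n / 2" if "r \<le> m" for r
    using G[OF that] unfolding sub .
  have E: "\<bar>(\<Sum>i=1..j. x i) - real j\<bar> \<le> \<delta> * real n" if "1 \<le> j" "j \<le> n" for j
  proof -
    have "\<bar>S j - real j\<bar> \<le> \<delta> * real n / 2 + real n / real m + 1"
      by (rule grid[OF mono m Gr \<open>j \<le> n\<close>])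
    then show ?thesis using hm unfolding S_def by linarith
  qed
  obtain k where T0: "0 \<le> T_last n x" and k: "0 < k" "k < n"
    and eq: "real k / real n * P0 n x n = P0 n x k + real k / real n * (1 - real k / real n) * (T_last n x)^2 / 2"
  proof -
    have "0 \<le> T_last n x \<and> (\<exists>k. 0 < k \<and> k < n \<and> real k / real n * P0 n x n =
        P0 n x k + real k / real n * (1 - real k / real n) * (T_last n x)^2 / 2)"
      by (rule T_last_char[OF n]) (rule x)
    then show ?thesis using that by blast
  qed
  have "\<bar>(T_last n x)^2 - 1\<bar> \<le> 4 * \<delta>" by (rule Q_bound[OF k E eq])
  then show ?thesis using abs_sub1_le[OF T0] by linarith
qed

theorem proposition3:
  fixes M :: "'a measure" and X :: "nat \<Rightarrow> 'a \<Rightarrow> real"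
  assumes "prob_space M"
    and "prob_space.indep_vars M (\<lambda>_. borel) X UNIV"
    and "\<And>i. distr M borel (X i) = distr M borel (X 0)"
    and "\<And>i. AE \<omega> in M. 0 \<le> X i \<omega>"
    and "integrable M (X 0)"
    and "integral\<^sup>L M (X 0) = 1"
    and "integrable M (\<lambda>\<omega>. (X 0 \<omega>) ^ 2)"
  shows "(\<forall>n. (\<lambda>\<omega>. T_last n (\<lambda>i. X i \<omega>)) \<in> borel_measurable M)
       \<and> (\<forall>\<epsilon>>0. (\<lambda>n. measure M {\<omega>\<in>space M. \<epsilon> < \<bar>T_last n (\<lambda>i. X i \<omega>) - 1\<bar>})
                   \<longlonglongrightarrow> 0)"
proof -
  interpret prob_space M by fact
  note ind = assms(2) and d = assms(3) and nonneg = assms(4)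
    and int1 = assms(5) and mean = assms(6) and int2 = assms(7)
  have rv: "X i \<in> borel_measurable M" for i using ind unfolding indep_vars_def by simp
  have meas: "(\<lambda>\<omega>. T_last n (\<lambda>i. X i \<omega>)) \<in> borel_measurable M" for n
    by (rule T_last_meas[OF rv])
  define V where "V = integral\<^sup>L M (\<lambda>\<omega>. (X 0 \<omega> - 1)^2)"
  have V0: "0 \<le> V" unfolding V_def by simp
  have conv: "(\<lambda>n. measure M {\<omega>\<in>space M. \<epsilon> < \<bar>T_last n (\<lambda>i. X i \<omega>) - 1\<bar>}) \<longlonglongrightarrow> 0"
    if \<epsilon>: "\<epsilon> > 0" for \<epsilon>
  proof -
    define \<delta> where "\<delta> = \<epsilon> / 4"
    have \<delta>0: "0 < \<delta>" using \<epsilon> by (simp add: \<delta>_def)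
    define m :: nat where "m = nat \<lceil>4 / \<delta>\<rceil> + 1"
    have m1: "1 \<le> m" by (simp add: m_def)
    have m4: "4 / \<delta> \<le> real m" unfolding m_def by linarith
    have minv: "1 / real m \<le> \<delta> / 4"
    proof -
      have "0 < real m" using m1 by simp
      then show ?thesis using m4 \<delta>0 by (simp add: field_simps)
    qed
    define N0 :: nat where "N0 = nat \<lceil>4 / \<delta>\<rceil> + 2"
    define C where "C = real (Suc m) * (4 * V / \<delta>^2)"
    define A where "A n r = {\<omega>\<in>space M. \<delta> * real n / 2 \<le> \<bar>\<Sum>i=1..(r * n div m). (X i \<omega> - 1)\<bar>}" for n r
    define Bad where "Bad n = {\<omega>\<in>space M. \<epsilon> < \<bar>T_last n (\<lambda>i. X i \<omega>) - 1\<bar>}" for n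
    have Asets: "A n r \<in> sets M" for n r
    proof -
      have "(\<lambda>\<omega>. \<bar>\<Sum>i=1..(r * n div m). (X i \<omega> - 1)\<bar>) \<in> borel_measurable M" using rv by measurable
      then show ?thesis unfolding A_def by measurable
    qed
    have Abound: "measure M (A n r) \<le> 4 * V / (\<delta>^2 * real n)" if nN: "N0 \<le> n" and r: "r \<le> m" for n r
    proof -
      define j where "j = r * n div m"
      have jn: "j \<le> n"
      proof -
        have "r * n \<le> m * n" using r by simp
        then have "j \<le> m * n div m" unfolding j_def by (rule div_le_mono)
        then show ?thesis using m1 by simp
      qed
      define f where "f = (\<lambda>\<omega>. \<Sum>i\<in>{1..j}. X i \<omega> - 1)"
      note vs = var_sum[OF ind d int1 int2 mean, of "{1..j}"]
      have n0: "0 < real n" using nN by (simp add: N0_def)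
      have a0: "0 < \<delta> * real n / 2" using \<delta>0 n0 by simp
      have fm: "f \<in> borel_measurable M" unfolding f_def using rv by measurable
      have "measure M {\<omega>\<in>space M. \<delta> * real n / 2 \<le> \<bar>f \<omega> - integral\<^sup>L M f\<bar>}
          \<le> integral\<^sup>L M (\<lambda>\<omega>. (f \<omega> - integral\<^sup>L M f)^2) / (\<delta> * real n / 2)^2"
        by (rule Chebyshev_inequality[OF fm _ a0]) (use vs(1) in \<open>simp add: f_def\<close>)
      moreover have "integral\<^sup>L M f = 0" using vs(3) by (simp add: f_def)
      moreover have "integral\<^sup>L M (\<lambda>\<omega>. (f \<omega>)^2) = real j * V"
        using vs(2) by (simp add: f_def V_def)
      ultimately have "measure M (A n r) \<le> real j * V / (\<delta> * real n / 2)^2"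
        by (simp add: A_def f_def j_def)
      also have "\<dots> \<le> real n * V / (\<delta> * real n / 2)^2"
        using jn V0 by (intro divide_right_mono mult_right_mono) auto
      also have "\<dots> = 4 * V / (\<delta>^2 * real n)"
        using n0 \<delta>0 by (simp add: power2_eq_square field_simps)
      finally show ?thesis .
    qed
    have incl: "AE \<omega> in M. \<omega> \<in> Bad n \<longrightarrow> \<omega> \<in> (\<Union>r\<in>{..m}. A n r)" if nN: "N0 \<le> n" for n
    proof -
      have "AE \<omega> in M. \<forall>i. 0 \<le> X i \<omega>" using nonneg by (simp add: AE_all_countable)
      then show ?thesis
      proof (rule AE_mp, intro AE_I2 impI)
        fix \<omega> assume w: "\<omega> \<in> space M" and nn: "\<forall>i. 0 \<le> X i \<omega>" and b: "\<omega> \<in> Bad n"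
        show "\<omega> \<in> (\<Union>r\<in>{..m}. A n r)"
        proof (rule ccontr)
          assume nA: "\<omega> \<notin> (\<Union>r\<in>{..m}. A n r)"
          have G: "\<bar>\<Sum>i=1..(r * n div m). (X i \<omega> - 1)\<bar> \<le> \<delta> * real n / 2" if "r \<le> m" for r
          proof -
            have "\<omega> \<notin> A n r" using nA that by auto
            then have "\<not> (\<delta> * real n / 2 \<le> \<bar>\<Sum>i=1..(r * n div m). (X i \<omega> - 1)\<bar>)"
              using w unfolding A_def by simp
            then show ?thesis by simp
          qed
          have n2: "2 \<le> n" using nN by (simp add: N0_def)
          have nd: "4 / \<delta> \<le> real n" using nN unfolding N0_def by linarith
          have hm: "real n / real m + 1 \<le> \<delta> * real n / 2"
          proof -
            have "real n / real m = real n * (1 / real m)" by simp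
            also have "\<dots> \<le> real n * (\<delta> / 4)" using minv by (intro mult_left_mono) auto
            finally have a: "real n / real m \<le> \<delta> * real n / 4" by (simp add: mult.commute)
            have "4 \<le> \<delta> * real n" using nd \<delta>0 by (simp add: field_simps)
            then show ?thesis using a by linarith
          qed
          have "\<bar>T_last n (\<lambda>i. X i \<omega>) - 1\<bar> \<le> 4 * \<delta>"
            by (rule det_main[OF n2 m1 _ hm G]) (use nn in auto)
          then show False using b unfolding Bad_def \<delta>_def by simp
        qed
      qed
    qed
    have bound: "measure M (Bad n) \<le> C / real n" if nN: "N0 \<le> n" for n
    proof -
      have "measure M (Bad n) \<le> measure M (\<Union>r\<in>{..m}. A n r)"
        using incl[OF nN] Asets by (intro finite_measure_mono_AE) auto
      also have "\<dots> \<le> (\<Sum>r\<in>{..m}. measure M (A n r))"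
        using Asets by (intro finite_measure_subadditive_finite) auto
      also have "\<dots> \<le> (\<Sum>r\<in>{..m}. 4 * V / (\<delta>^2 * real n))"
        using Abound[OF nN] by (intro sum_mono) auto
      also have "\<dots> = C / real n" by (simp add: C_def field_simps)
      finally show ?thesis .
    qed
    show ?thesis
    proof (rule tendsto_sandwich[of "\<lambda>_. 0" _ sequentially "\<lambda>n. C / real n"])
      show "\<forall>\<^sub>F n in sequentially. 0 \<le> measure M {\<omega>\<in>space M. \<epsilon> < \<bar>T_last n (\<lambda>i. X i \<omega>) - 1\<bar>}"
        by simp
      show "\<forall>\<^sub>F n in sequentially. measure M {\<omega>\<in>space M. \<epsilon> < \<bar>T_last n (\<lambda>i. X i \<omega>) - 1\<bar>} \<le> C / real n"
        using bound unfolding Bad_def eventually_sequentially by blast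
      show "(\<lambda>_. 0::real) \<longlonglongrightarrow> 0" by simp
      show "(\<lambda>n. C / real n) \<longlonglongrightarrow> 0" by (rule lim_const_over_n)
    qed
  qed
  show ?thesis using meas conv by blast
qed


end
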